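(* There is an absolute constant $C>0$ such that the following holds. Let $\varepsilon\in(0,1)$, $\delta\in(0,1/2]$, $n,s\in\mathbb{N}$, $k\ge2$, $\nu=\lceil n/s\rceil+1$, $\eta\ge0$, and let $W\in\mathbb{R}^{k\times\nu}$. There exists an $(\varepsilon,\delta)$-LNDP algorithm $\mathcal{A}^{W,\eta}$ such that for every graph $G$ on node set $[n]$, \[ \mathbb{E}\big[\|\mathcal{A}^{W,\eta}(G)-W\tilde f_{G,s}\|_\infty\big]\le C\Big(\eta+\gamma_\eta(W)\sqrt{\Big(\frac1n+\frac1{s^2}\Big)\log k}\cdot\frac{\sqrt{\log(1/\delta)}}{\varepsilon}\Big), \] where $\gamma_\eta(W)=\min\{\|L\|_{2\to\infty}\|R\|_{1\to2}: L\in\mathbb{R}^{k\times\ell},R\in\mathbb{R}^{\ell\times\nu},\ell\in\mathbb{N},\ \|LR-W\|_{1\to\infty}\le\eta\}$.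
   Context: Graphs are simple and undirected on node set $[n]$; $N_i^G$ is the neighborhood of node $i$ and $d_i=|N_i^G|$. Two graphs on $[n]$ are node neighbors if they differ only in edges incident to a single node. Random variables $R_1,R_2$ are $(\varepsilon,\delta)$-indistinguishable if for every event $Y$, $\Pr[R_1\in Y]\le e^\varepsilon\Pr[R_2\in Y]+\delta$ and symmetrically. An algorithm $\mathcal{A}$ on $n$-node graphs is (noninteractive) $(\varepsilon,\delta)$-LNDP if there exist a distribution over public random strings $\rho$, local randomizers $\mathcal{R}_{1,\rho},\dots,\mathcal{R}_{n,\rho}$ (with independent internal randomness), and a postprocessing $\mathcal{P}$ with $\mathcal{A}(G)=\mathcal{P}(\mathcal{R}_{1,\rho}(N_1^G),\dots,\mathcal{R}_{n,\rho}(N_n^G))$, such that for every fixed $\rho$ and every node-neighboring $G,G'$ the randomizer output vectors on $G$ and $G'$ are $(\varepsilon,\delta)$-indistinguishable. The degree distribution of $G$ is $f_G(d)=\frac1n|\{i:d_i=d\}|$, $d\in\{0,\dots,n-1\}$. For $s\in\mathbb{N}$, $R_s(x)=s(\lfloor x/s\rfloor+B)$ with $B\sim\mathrm{Bern}(x/s-\lfloor x/s\rfloor)$. The compressed blurry degree distribution $\tilde f_{G,s}$ is the law of $R_s(X)/s$ for $X\sim f_G$, viewed as a vector in $\mathbb{R}^\nu$ indexed by $0,\dots,\nu-1$. For a matrix $A$: $\|A\|_{1\to2}$ is the maximum $\ell_2$ norm of a column, $\|A\|_{2\to\infty}$ the maximum $\ell_2$ norm of a row, $\|A\|_{1\to\infty}$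 the maximum absolute entry. *)

theory Defs
  imports "HOL-Probability.Probability"
begin

definition simple_graph :: "nat \<Rightarrow> nat set set \<Rightarrow> bool" where
  "simple_graph n G \<longleftrightarrow> (\<forall>e\<in>G. \<exists>i j. i \<noteq> j \<and> i < n \<and> j < n \<and> e = {i, j})"

definition nbhd :: "nat set set \<Rightarrow> nat \<Rightarrow> nat set" where
  "nbhd G i = {j. {i, j} \<in> G \<and> j \<noteq> i}"

definition deg :: "nat set set \<Rightarrow> nat \<Rightarrow> nat" where
  "deg G i = card (nbhd G i)"

definition node_neighbors :: "nat \<Rightarrow> nat set set \<Rightarrow> nat set set \<Rightarrow> bool" where
  "node_neighbors n G G' \<longleftrightarrow> (\<exists>v<n. \<forall>e. v \<notin> e \<longrightarrow> (e \<in> G \<longleftrightarrow> e \<in> G'))"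

definition degree_distribution :: "nat \<Rightarrow> nat set set \<Rightarrow> nat \<Rightarrow> real" where
  "degree_distribution n G d = real (card {i. i < n \<and> deg G i = d}) / real n"

text \<open>Probability that R_s(x)/s = j, where R_s(x) = s(floor(x/s) + B),
  B ~ Bern(x/s - floor(x/s)).\<close>
definition blur_prob :: "nat \<Rightarrow> nat \<Rightarrow> nat \<Rightarrow> real" where
  "blur_prob s x j =
     (let q = real x / real s - of_int \<lfloor>real x / real s\<rfloor>;
          b = nat \<lfloor>real x / real s\<rfloor>
      in (if j = b then 1 - q else 0) + (if j = b + 1 then q else 0))"

text \<open>Compressed blurry degree distribution: the law of R_s(X)/s for X ~ f_G,
  as a vector indexed by 0..nu-1.\<close>
definition blurry_deg_dist :: "nat \<Rightarrow> nat \<Rightarrow> nat set set \<Rightarrow> nat \<Rightarrow> real" where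
  "blurry_deg_dist n s G j = (\<Sum>d<n. degree_distribution n G d * blur_prob s d j)"

definition norm_2_inf :: "nat \<Rightarrow> nat \<Rightarrow> (nat \<Rightarrow> nat \<Rightarrow> real) \<Rightarrow> real" where
  "norm_2_inf m p A = Max {sqrt (\<Sum>j<p. (A i j)\<^sup>2) | i. i < m}"

definition norm_1_2 :: "nat \<Rightarrow> nat \<Rightarrow> (nat \<Rightarrow> nat \<Rightarrow> real) \<Rightarrow> real" where
  "norm_1_2 m p A = Max {sqrt (\<Sum>i<m. (A i j)\<^sup>2) | j. j < p}"

definition norm_1_inf :: "nat \<Rightarrow> nat \<Rightarrow> (nat \<Rightarrow> nat \<Rightarrow> real) \<Rightarrow> real" where
  "norm_1_inf m p A = Max {\<bar>A i j\<bar> | i j. i < m \<and> j < p}"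

definition mat_mult :: "nat \<Rightarrow> (nat \<Rightarrow> nat \<Rightarrow> real) \<Rightarrow> (nat \<Rightarrow> nat \<Rightarrow> real) \<Rightarrow> nat \<Rightarrow> nat \<Rightarrow> real" where
  "mat_mult l L R i j = (\<Sum>t<l. L i t * R t j)"

definition gamma_fact :: "real \<Rightarrow> nat \<Rightarrow> nat \<Rightarrow> (nat \<Rightarrow> nat \<Rightarrow> real) \<Rightarrow> real" where
  "gamma_fact \<eta> k \<nu> W = Inf {norm_2_inf k l L * norm_1_2 l \<nu> R | l L R.
       norm_1_inf k \<nu> (\<lambda>i j. mat_mult l L R i j - W i j) \<le> \<eta>}"

definition indist :: "real \<Rightarrow> real \<Rightarrow> 'a measure \<Rightarrow> 'a measure \<Rightarrow> bool" where
  "indist \<epsilon> \<delta> M1 M2 \<longleftrightarrow>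
     (\<forall>Y\<in>sets M1. measure M1 Y \<le> exp \<epsilon> * measure M2 Y + \<delta>) \<and>
     (\<forall>Y\<in>sets M2. measure M2 Y \<le> exp \<epsilon> * measure M1 Y + \<delta>)"

text \<open>Joint law of the randomizer outputs for fixed public string rho
  (independent internal randomness = product measure).\<close>
definition node_outputs :: "nat \<Rightarrow> ('r \<Rightarrow> nat \<Rightarrow> nat set \<Rightarrow> 'b measure) \<Rightarrow> 'r \<Rightarrow> nat set set \<Rightarrow> (nat \<Rightarrow> 'b) measure" where
  "node_outputs n R \<rho> G = PiM {..<n} (\<lambda>i. R \<rho> i (nbhd G i))"

definition alg_output :: "nat \<Rightarrow> 'r measure \<Rightarrow> ('r \<Rightarrow> nat \<Rightarrow> nat set \<Rightarrow> 'b measure) \<Rightarrow> ((nat \<Rightarrow> 'b) \<Rightarrow> 'o) \<Rightarrow> 'o measure \<Rightarrow> nat set set \<Rightarrow> 'o measure" where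
  "alg_output n Prho R P Out G = Prho \<bind> (\<lambda>\<rho>. distr (node_outputs n R \<rho> G) Out P)"

definition LNDP :: "real \<Rightarrow> real \<Rightarrow> nat \<Rightarrow> 'r measure \<Rightarrow> 'b measure \<Rightarrow> ('r \<Rightarrow> nat \<Rightarrow> nat set \<Rightarrow> 'b measure) \<Rightarrow> ((nat \<Rightarrow> 'b) \<Rightarrow> 'o) \<Rightarrow> 'o measure \<Rightarrow> bool" where
  "LNDP \<epsilon> \<delta> n Prho Mb R P Out \<longleftrightarrow>
     prob_space Prho \<and>
     (\<forall>\<rho>\<in>space Prho. \<forall>i<n. \<forall>S. S \<subseteq> {..<n} \<longrightarrow> R \<rho> i S \<in> space (prob_algebra Mb)) \<and>
     P \<in> measurable (PiM {..<n} (\<lambda>_. Mb)) Out \<and>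
     (\<forall>G. simple_graph n G \<longrightarrow>
        (\<lambda>\<rho>. distr (node_outputs n R \<rho> G) Out P) \<in> measurable Prho (subprob_algebra Out)) \<and>
     (\<forall>\<rho>\<in>space Prho. \<forall>G G'. simple_graph n G \<and> simple_graph n G' \<and> node_neighbors n G G' \<longrightarrow>
        indist \<epsilon> \<delta> (node_outputs n R \<rho> G) (node_outputs n R \<rho> G'))"

text \<open>Output space for estimates of vectors in R^k: functions nat => real (coordinates >= k unused).\<close>
definition vec_space :: "(nat \<Rightarrow> real) measure" where
  "vec_space = PiM UNIV (\<lambda>_. borel)"

definition sup_err :: "nat \<Rightarrow> (nat \<Rightarrow> real) \<Rightarrow> (nat \<Rightarrow> real) \<Rightarrow> real" where
  "sup_err k x y = Max {\<bar>x i - y i\<bar> | i. i < k}"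

end

theory Submission
  imports Defs
begin

lemma PiM_density:
  fixes M :: "'i \<Rightarrow> 'a measure" and f :: "'i \<Rightarrow> 'a \<Rightarrow> ennreal"
  assumes fin: "finite I" and sf: "\<And>i. sigma_finite_measure (M i)"
   and psf: "\<And>i. sigma_finite_measure (density (M i) (f i))"
   and meas: "\<And>i. f i \<in> borel_measurable (M i)"
  shows "PiM I (\<lambda>i. density (M i) (f i)) = density (PiM I M) (\<lambda>x. \<Prod>i\<in>I. f i (x i))"
proof -
  interpret D: product_sigma_finite "\<lambda>i. density (M i) (f i)" using psf by (simp add: product_sigma_finite_def)
  interpret B: product_sigma_finite M using sf by (simp add: product_sigma_finite_def)
  have gm: "(\<lambda>x. \<Prod>i\<in>I. f i (x i)) \<in> borel_measurable (PiM I M)"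
    using meas by measurable
  show ?thesis
  proof (rule D.PiM_eqI[symmetric, OF fin])
    show "sets (density (Pi\<^sub>M I M) (\<lambda>x. \<Prod>i\<in>I. f i (x i))) = sets (Pi\<^sub>M I (\<lambda>i. density (M i) (f i)))"
      by (auto intro!: sets_PiM_cong)
  next
    fix A assume A: "\<And>i. i \<in> I \<Longrightarrow> A i \<in> sets (density (M i) (f i))"
    then have A': "\<And>i. i \<in> I \<Longrightarrow> A i \<in> sets (M i)" by simp
    have "emeasure (density (Pi\<^sub>M I M) (\<lambda>x. \<Prod>i\<in>I. f i (x i))) (Pi\<^sub>E I A)
        = (\<integral>\<^sup>+ x. (\<Prod>i\<in>I. f i (x i)) * indicator (Pi\<^sub>E I A) x \<partial>Pi\<^sub>M I M)"
      using A' gm fin by (subst emeasure_density) (auto intro!: sets_PiM_I_finite)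
    also have "\<dots> = (\<integral>\<^sup>+ x. (\<Prod>i\<in>I. f i (x i) * indicator (A i) (x i)) \<partial>Pi\<^sub>M I M)"
    proof (rule nn_integral_cong)
      fix x assume "x \<in> space (Pi\<^sub>M I M)"
      then have "x \<in> extensional I" by (simp add: space_PiM PiE_def)
      then show "(\<Prod>i\<in>I. f i (x i)) * indicator (Pi\<^sub>E I A) x = (\<Prod>i\<in>I. f i (x i) * indicator (A i) (x i))"
        using fin by (auto simp add: prod.distrib indicator_def PiE_def Pi_def)
    qed
    also have "\<dots> = (\<Prod>i\<in>I. \<integral>\<^sup>+ y. f i y * indicator (A i) y \<partial>M i)"
      using fin A' meas by (subst B.product_nn_integral_prod) auto
    also have "\<dots> = (\<Prod>i\<in>I. emeasure (density (M i) (f i)) (A i))"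
      using A' meas by (intro prod.cong refl) (simp add: emeasure_density)
    finally show "emeasure (density (Pi\<^sub>M I M) (\<lambda>x. \<Prod>i\<in>I. f i (x i))) (Pi\<^sub>E I A) = (\<Prod>i\<in>I. emeasure (density (M i) (f i)) (A i))" .
  qed
qed

lemma nn_integral_normal_density_1:
  assumes "0 < \<sigma>"
  shows "(\<integral>\<^sup>+x. ennreal (normal_density \<mu> \<sigma> x) \<partial>lborel) = 1"
proof -
  interpret prob_space "density lborel (\<lambda>x. ennreal (normal_density \<mu> \<sigma> x))"
    using prob_space_normal_density[OF assms] .
  have "emeasure (density lborel (\<lambda>x. ennreal (normal_density \<mu> \<sigma> x))) UNIV = 1"
    using emeasure_space_1 by simp
  then show ?thesis by (simp add: emeasure_density)
qed

lemma normal_mgf: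
  assumes "0 < \<sigma>"
  shows "(\<integral>\<^sup>+x. ennreal (exp (c * (x - \<mu>))) \<partial>density lborel (\<lambda>x. ennreal (normal_density \<mu> \<sigma> x)))
         = ennreal (exp (c\<^sup>2 * \<sigma>\<^sup>2 / 2))"
proof -
  have eq: "normal_density \<mu> \<sigma> x * exp (c * (x - \<mu>)) = exp (c\<^sup>2 * \<sigma>\<^sup>2 / 2) * normal_density (\<mu> + c * \<sigma>\<^sup>2) \<sigma> x" for x
  proof -
    have "-(x - \<mu>)\<^sup>2/ (2 * \<sigma>\<^sup>2) + c * (x - \<mu>) = c\<^sup>2 * \<sigma>\<^sup>2 / 2 + (-(x - (\<mu> + c * \<sigma>\<^sup>2))\<^sup>2/ (2 * \<sigma>\<^sup>2))"
      using assms by (simp add: field_simps power2_eq_square)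
    then have "exp (-(x - \<mu>)\<^sup>2/ (2 * \<sigma>\<^sup>2)) * exp (c * (x - \<mu>)) = exp (c\<^sup>2 * \<sigma>\<^sup>2 / 2) * exp (-(x - (\<mu> + c * \<sigma>\<^sup>2))\<^sup>2/ (2 * \<sigma>\<^sup>2))"
      by (simp add: exp_add[symmetric])
    then show ?thesis unfolding normal_density_def by (simp add: field_simps)
  qed
  have "(\<integral>\<^sup>+x. ennreal (exp (c * (x - \<mu>))) \<partial>density lborel (\<lambda>x. ennreal (normal_density \<mu> \<sigma> x)))
      = (\<integral>\<^sup>+x. ennreal (normal_density \<mu> \<sigma> x) * ennreal (exp (c * (x - \<mu>))) \<partial>lborel)"
    by (subst nn_integral_density) auto
  also have "\<dots> = (\<integral>\<^sup>+x. ennreal (exp (c\<^sup>2 * \<sigma>\<^sup>2 / 2)) * ennreal (normal_density (\<mu> + c * \<sigma>\<^sup>2) \<sigma> x) \<partial>lborel)"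
    by (intro nn_integral_cong) (simp add: ennreal_mult'[symmetric] eq)
  also have "\<dots> = ennreal (exp (c\<^sup>2 * \<sigma>\<^sup>2 / 2)) * (\<integral>\<^sup>+x. ennreal (normal_density (\<mu> + c * \<sigma>\<^sup>2) \<sigma> x) \<partial>lborel)"
    by (rule nn_integral_cmult) auto
  also have "\<dots> = ennreal (exp (c\<^sup>2 * \<sigma>\<^sup>2 / 2))"
    using nn_integral_normal_density_1[OF assms] by simp
  finally show ?thesis .
qed

definition gnode :: "nat \<Rightarrow> real \<Rightarrow> (nat \<Rightarrow> real) \<Rightarrow> (nat \<Rightarrow> real) measure" where
  "gnode l \<sigma> m = PiM {..<l} (\<lambda>t. density lborel (\<lambda>x. ennreal (normal_density (m t) \<sigma> x)))"

definition gjoint :: "nat \<Rightarrow> nat \<Rightarrow> real \<Rightarrow> (nat \<Rightarrow> nat \<Rightarrow> real) \<Rightarrow> (nat \<Rightarrow> nat \<Rightarrow> real) measure" where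
  "gjoint n l \<sigma> \<mu> = PiM {..<n} (\<lambda>i. gnode l \<sigma> (\<mu> i))"

lemma sets_gnode: "sets (gnode l \<sigma> m) = sets (PiM {..<l} (\<lambda>_. borel))"
  unfolding gnode_def by (intro sets_PiM_cong) auto

lemma prob_space_gnode: "0 < \<sigma> \<Longrightarrow> prob_space (gnode l \<sigma> m)"
  unfolding gnode_def by (intro prob_space_PiM prob_space_normal_density)

lemma gnode_mgf:
  assumes "0 < \<sigma>"
  shows "(\<integral>\<^sup>+z. ennreal (exp (\<Sum>t<l. c t * (z t - m t))) \<partial>gnode l \<sigma> m) = ennreal (exp (\<Sum>t<l. (c t)\<^sup>2 * \<sigma>\<^sup>2 / 2))"
proof -
  interpret P: product_sigma_finite "\<lambda>t. density lborel (\<lambda>x. ennreal (normal_density (m t) \<sigma> x))"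
    unfolding product_sigma_finite_def
    using prob_space_normal_density[OF assms] prob_space_imp_sigma_finite by blast
  have "(\<integral>\<^sup>+z. ennreal (exp (\<Sum>t<l. c t * (z t - m t))) \<partial>gnode l \<sigma> m)
      = (\<integral>\<^sup>+z. (\<Prod>t<l. ennreal (exp (c t * (z t - m t)))) \<partial>gnode l \<sigma> m)"
    by (intro nn_integral_cong) (simp add: exp_sum prod_ennreal)
  also have "\<dots> = (\<Prod>t<l. \<integral>\<^sup>+x. ennreal (exp (c t * (x - m t))) \<partial>density lborel (\<lambda>x. ennreal (normal_density (m t) \<sigma> x)))"
    unfolding gnode_def by (rule P.product_nn_integral_prod) auto
  also have "\<dots> = (\<Prod>t<l. ennreal (exp ((c t)\<^sup>2 * \<sigma>\<^sup>2 / 2)))"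
    using normal_mgf[OF assms] by simp
  also have "\<dots> = ennreal (exp (\<Sum>t<l. (c t)\<^sup>2 * \<sigma>\<^sup>2 / 2))"
    by (simp add: exp_sum prod_ennreal)
  finally show ?thesis .
qed

lemma gjoint_mgf:
  assumes "0 < \<sigma>"
  shows "(\<integral>\<^sup>+y. ennreal (exp (\<Sum>i<n. \<Sum>t<l. c i t * (y i t - \<mu> i t))) \<partial>gjoint n l \<sigma> \<mu>)
       = ennreal (exp (\<Sum>i<n. \<Sum>t<l. (c i t)\<^sup>2 * \<sigma>\<^sup>2 / 2))"
proof -
  interpret P: product_sigma_finite "\<lambda>i. gnode l \<sigma> (\<mu> i)"
    unfolding product_sigma_finite_def
    using prob_space_gnode[OF assms] prob_space_imp_sigma_finite by blast
  have "(\<integral>\<^sup>+y. ennreal (exp (\<Sum>i<n. \<Sum>t<l. c i t * (y i t - \<mu> i t))) \<partial>gjoint n l \<sigma> \<mu>)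
      = (\<integral>\<^sup>+y. (\<Prod>i<n. ennreal (exp (\<Sum>t<l. c i t * (y i t - \<mu> i t)))) \<partial>gjoint n l \<sigma> \<mu>)"
    by (intro nn_integral_cong) (simp add: exp_sum prod_ennreal prod_nonneg)
  also have "\<dots> = (\<Prod>i<n. \<integral>\<^sup>+z. ennreal (exp (\<Sum>t<l. c i t * (z t - \<mu> i t))) \<partial>gnode l \<sigma> (\<mu> i))"
    unfolding gjoint_def
  proof (rule P.product_nn_integral_prod)
    fix i show "(\<lambda>z. ennreal (exp (\<Sum>t<l. c i t * (z t - \<mu> i t)))) \<in> borel_measurable (gnode l \<sigma> (\<mu> i))"
      unfolding measurable_cong_sets[OF sets_gnode refl] by measurable
  qed auto
  also have "\<dots> = (\<Prod>i<n. ennreal (exp (\<Sum>t<l. (c i t)\<^sup>2 * \<sigma>\<^sup>2 / 2)))"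
    using gnode_mgf[OF assms] by simp
  also have "\<dots> = ennreal (exp (\<Sum>i<n. \<Sum>t<l. (c i t)\<^sup>2 * \<sigma>\<^sup>2 / 2))"
    by (simp add: exp_sum prod_ennreal prod_nonneg)
  finally show ?thesis .
qed


lemma measurable_comp2:
  assumes "i \<in> I" "t \<in> J"
  shows "(\<lambda>x. x i t) \<in> measurable (PiM I (\<lambda>_. PiM J (\<lambda>_. M))) M"
proof -
  have "(\<lambda>x. x i) \<in> measurable (PiM I (\<lambda>_. PiM J (\<lambda>_. M))) (PiM J (\<lambda>_. M))"
    using assms by measurable
  moreover have "(\<lambda>z. z t) \<in> measurable (PiM J (\<lambda>_. M)) M" using assms by measurable
  ultimately show ?thesis by (rule measurable_comp[of _ _ _ "\<lambda>z. z t", unfolded comp_def])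
qed

definition gbase :: "nat \<Rightarrow> nat \<Rightarrow> (nat \<Rightarrow> nat \<Rightarrow> real) measure" where
  "gbase n l = PiM {..<n} (\<lambda>_. PiM {..<l} (\<lambda>_. lborel))"

lemma gbase_comp:
  assumes "i \<in> {..<n}" "t \<in> {..<l}"
  shows "(\<lambda>y. y i t) \<in> borel_measurable (gbase n l)"
proof -
  have "(\<lambda>y. y i t) \<in> measurable (gbase n l) lborel"
    unfolding gbase_def by (rule measurable_comp2[OF assms])
  then show ?thesis by simp
qed

lemma sigma_finite_PiM_lborel: "sigma_finite_measure (PiM {..<l::nat} (\<lambda>_. (lborel :: real measure)))"
proof -
  interpret product_sigma_finite "\<lambda>_. (lborel :: real measure)"
    by (simp add: product_sigma_finite_def lborel.sigma_finite_measure_axioms)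
  have "finite {..<l}" by simp
  from sigma_finite[OF this] show ?thesis .
qed

lemma gnode_density:
  assumes "0 < \<sigma>"
  shows "gnode l \<sigma> m = density (PiM {..<l} (\<lambda>_. lborel)) (\<lambda>z. \<Prod>t<l. ennreal (normal_density (m t) \<sigma> (z t)))"
  unfolding gnode_def
  by (rule PiM_density[where M="\<lambda>_. lborel" and f="\<lambda>t x. ennreal (normal_density (m t) \<sigma> x)", simplified])
     (auto intro: lborel.sigma_finite_measure_axioms prob_space_imp_sigma_finite prob_space_normal_density assms)

lemma gjoint_density:
  assumes "0 < \<sigma>"
  shows "gjoint n l \<sigma> \<mu> = density (gbase n l) (\<lambda>y. \<Prod>i<n. \<Prod>t<l. ennreal (normal_density (\<mu> i t) \<sigma> (y i t)))"
proof -
  have "gjoint n l \<sigma> \<mu> = PiM {..<n} (\<lambda>i. density (PiM {..<l} (\<lambda>_. lborel)) (\<lambda>z. \<Prod>t<l. ennreal (normal_density (\<mu> i t) \<sigma> (z t))))"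
    unfolding gjoint_def using gnode_density[OF assms] by simp
  also have "\<dots> = density (gbase n l) (\<lambda>y. \<Prod>i<n. \<Prod>t<l. ennreal (normal_density (\<mu> i t) \<sigma> (y i t)))"
    unfolding gbase_def
  proof (rule PiM_density)
    fix i
    show "sigma_finite_measure (density (Pi\<^sub>M {..<l} (\<lambda>_. lborel)) (\<lambda>z. \<Prod>t<l. ennreal (normal_density (\<mu> i t) \<sigma> (z t))))"
      using gnode_density[OF assms, of l "\<mu> i"] prob_space_gnode[OF assms, of l "\<mu> i"] prob_space_imp_sigma_finite by metis
    show "(\<lambda>z. \<Prod>t<l. ennreal (normal_density (\<mu> i t) \<sigma> (z t))) \<in> borel_measurable (Pi\<^sub>M {..<l} (\<lambda>_. lborel))"
      by measurable
  qed (auto intro: sigma_finite_PiM_lborel)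
  finally show ?thesis .
qed

lemma sets_gjoint: "0 < \<sigma> \<Longrightarrow> sets (gjoint n l \<sigma> \<mu>) = sets (gbase n l)"
  by (simp add: gjoint_density)

lemma gjoint_density':
  assumes "0 < \<sigma>"
  shows "gjoint n l \<sigma> \<mu> = density (gbase n l) (\<lambda>y. ennreal (\<Prod>i<n. \<Prod>t<l. normal_density (\<mu> i t) \<sigma> (y i t)))"
proof -
  note gbase_comp[measurable]
  show ?thesis unfolding gjoint_density[OF assms]
    by (intro density_cong) (measurable, measurable, auto simp: prod_ennreal prod_nonneg)
qed

lemma prob_space_gjoint: "0 < \<sigma> \<Longrightarrow> prob_space (gjoint n l \<sigma> \<mu>)"
  unfolding gjoint_def by (intro prob_space_PiM prob_space_gnode)

lemma normal_density_shift:
  assumes "0 < \<sigma>"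
  shows "normal_density m \<sigma> x = exp ((m - m') * (x - m) / \<sigma>\<^sup>2 + (m - m')\<^sup>2 / (2 * \<sigma>\<^sup>2)) * normal_density m' \<sigma> x"
proof -
  have "-(x - m)\<^sup>2/ (2 * \<sigma>\<^sup>2) = (m - m') * (x - m) / \<sigma>\<^sup>2 + (m - m')\<^sup>2 / (2 * \<sigma>\<^sup>2) + (-(x - m')\<^sup>2/ (2 * \<sigma>\<^sup>2))"
    using assms by (simp add: field_simps power2_eq_square)
  then have "exp (-(x - m)\<^sup>2/ (2 * \<sigma>\<^sup>2)) = exp ((m - m') * (x - m) / \<sigma>\<^sup>2 + (m - m')\<^sup>2 / (2 * \<sigma>\<^sup>2)) * exp (-(x - m')\<^sup>2/ (2 * \<sigma>\<^sup>2))"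
    by (simp add: exp_add[symmetric])
  then show ?thesis unfolding normal_density_def by simp
qed

lemma exponent_bound:
  fixes Lg x \<epsilon> :: real
  assumes Lg: "2/3 \<le> Lg" and e: "0 < \<epsilon>" "\<epsilon> \<le> 1" and x0: "0 \<le> x" and x: "x \<le> \<epsilon>\<^sup>2 / (8 * Lg)"
  shows "(2 * Lg / \<epsilon>) * x / 2 - (2 * Lg / \<epsilon>) * \<epsilon> + (2 * Lg / \<epsilon>)\<^sup>2 * x / 2 \<le> - Lg"
proof -
  have Lx: "Lg * x \<le> \<epsilon>\<^sup>2 / 8" using x Lg by (simp add: field_simps)
  have a: "(2 * Lg / \<epsilon>) * x / 2 \<le> \<epsilon> / 8"
  proof -
    have "(2 * Lg / \<epsilon>) * x / 2 = (Lg * x) / \<epsilon>" using e by (simp add: field_simps)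
    also have "\<dots> \<le> (\<epsilon>\<^sup>2 / 8) / \<epsilon>" using Lx e by (intro divide_right_mono) auto
    also have "\<dots> = \<epsilon> / 8" using e by (simp add: power2_eq_square)
    finally show ?thesis .
  qed
  have b: "(2 * Lg / \<epsilon>)\<^sup>2 * x / 2 \<le> Lg / 4"
  proof -
    have "(2 * Lg / \<epsilon>)\<^sup>2 * x / 2 = 2 * Lg * (Lg * x) / \<epsilon>\<^sup>2" using e by (simp add: field_simps power2_eq_square)
    also have "\<dots> \<le> 2 * Lg * (\<epsilon>\<^sup>2 / 8) / \<epsilon>\<^sup>2" using Lx e Lg by (intro divide_right_mono mult_left_mono) auto
    also have "\<dots> = Lg / 4" using e by (simp add: field_simps)
    finally show ?thesis .
  qed
  have c: "(2 * Lg / \<epsilon>) * \<epsilon> = 2 * Lg" using e by simp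
  show ?thesis using a b c e Lg by linarith
qed

lemma gjoint_priv:
  fixes \<mu> \<mu>' :: "nat \<Rightarrow> nat \<Rightarrow> real"
  assumes \<sigma>: "0 < \<sigma>" and e: "0 < \<epsilon>" "\<epsilon> \<le> 1" and d: "0 < \<delta>" "\<delta> \<le> 1/2"
   and D: "(\<Sum>i<n. \<Sum>t<l. (\<mu> i t - \<mu>' i t)\<^sup>2) \<le> \<sigma>\<^sup>2 * \<epsilon>\<^sup>2 / (8 * ln (1/\<delta>))"
   and Y: "Y \<in> sets (gjoint n l \<sigma> \<mu>)"
  shows "measure (gjoint n l \<sigma> \<mu>) Y \<le> exp \<epsilon> * measure (gjoint n l \<sigma> \<mu>') Y + \<delta>"
proof -
  interpret P: prob_space "gjoint n l \<sigma> \<mu>" by (rule prob_space_gjoint[OF \<sigma>])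
  interpret Q: prob_space "gjoint n l \<sigma> \<mu>'" by (rule prob_space_gjoint[OF \<sigma>])
  define Lg where "Lg = ln (1/\<delta>)"
  have Lg: "2/3 \<le> Lg"
  proof -
    have "ln 2 \<le> ln (1/\<delta>)" using d by (subst ln_le_cancel_iff) (auto simp: field_simps)
    then show ?thesis using ln2_ge_two_thirds unfolding Lg_def by linarith
  qed
  define \<Delta> where "\<Delta> i t = \<mu> i t - \<mu>' i t" for i t
  define SD where "SD = (\<Sum>i<n. \<Sum>t<l. (\<Delta> i t)\<^sup>2)"
  define \<L> where "\<L> y = (\<Sum>i<n. \<Sum>t<l. \<Delta> i t * (y i t - \<mu> i t) / \<sigma>\<^sup>2 + (\<Delta> i t)\<^sup>2 / (2 * \<sigma>\<^sup>2))" for y :: "nat \<Rightarrow> nat \<Rightarrow> real"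
  define p where "p y = (\<Prod>i<n. \<Prod>t<l. normal_density (\<mu> i t) \<sigma> (y i t))" for y :: "nat \<Rightarrow> nat \<Rightarrow> real"
  define q where "q y = (\<Prod>i<n. \<Prod>t<l. normal_density (\<mu>' i t) \<sigma> (y i t))" for y :: "nat \<Rightarrow> nat \<Rightarrow> real"
  define T where "T = {y \<in> space (gbase n l). \<epsilon> < \<L> y}"
  define lam where "lam = 2 * Lg / \<epsilon>"
  have lam0: "0 \<le> lam" using Lg e unfolding lam_def by simp
  have Pd: "gjoint n l \<sigma> \<mu> = density (gbase n l) (\<lambda>y. ennreal (p y))"
    unfolding p_def by (rule gjoint_density'[OF \<sigma>])
  have Qd: "gjoint n l \<sigma> \<mu>' = density (gbase n l) (\<lambda>y. ennreal (q y))"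
    unfolding q_def by (rule gjoint_density'[OF \<sigma>])
  note gbase_comp[measurable]
  have pm[measurable]: "(\<lambda>y. ennreal (p y)) \<in> borel_measurable (gbase n l)"
    unfolding p_def by measurable
  have qm[measurable]: "(\<lambda>y. ennreal (q y)) \<in> borel_measurable (gbase n l)"
    unfolding q_def by measurable
  have Lm[measurable]: "\<L> \<in> borel_measurable (gbase n l)"
    unfolding \<L>_def by measurable
  have Tm: "T \<in> sets (gbase n l)" unfolding T_def by measurable
  have Yb: "Y \<in> sets (gbase n l)" using Y sets_gjoint[OF \<sigma>] by auto
  have pq: "p y = exp (\<L> y) * q y" for y
  proof -
    have "p y = (\<Prod>i<n. \<Prod>t<l. exp (\<Delta> i t * (y i t - \<mu> i t) / \<sigma>\<^sup>2 + (\<Delta> i t)\<^sup>2 / (2 * \<sigma>\<^sup>2)) * normal_density (\<mu>' i t) \<sigma> (y i t))"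
      unfolding p_def \<Delta>_def using normal_density_shift[OF \<sigma>] by simp
    also have "\<dots> = exp (\<L> y) * q y"
      unfolding \<L>_def q_def by (simp add: prod.distrib exp_sum)
    finally show ?thesis .
  qed
  have step1: "emeasure (gjoint n l \<sigma> \<mu>) Y \<le> ennreal (exp \<epsilon>) * emeasure (gjoint n l \<sigma> \<mu>') Y + emeasure (gjoint n l \<sigma> \<mu>) T"
  proof -
    have "emeasure (gjoint n l \<sigma> \<mu>) Y = (\<integral>\<^sup>+y. ennreal (p y) * indicator Y y \<partial>gbase n l)"
      unfolding Pd using Yb by (simp add: emeasure_density)
    also have "\<dots> \<le> (\<integral>\<^sup>+y. ennreal (exp \<epsilon>) * (ennreal (q y) * indicator Y y) + ennreal (p y) * indicator T y \<partial>gbase n l)"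
    proof (rule nn_integral_mono)
      fix y assume y: "y \<in> space (gbase n l)"
      show "ennreal (p y) * indicator Y y \<le> ennreal (exp \<epsilon>) * (ennreal (q y) * indicator Y y) + ennreal (p y) * indicator T y"
      proof (cases "\<L> y \<le> \<epsilon>")
        case True
        have q0: "0 \<le> q y" unfolding q_def by (simp add: prod_nonneg)
        have "p y \<le> exp \<epsilon> * q y" unfolding pq using True q0 by (intro mult_right_mono) auto
        then have "ennreal (p y) * indicator Y y \<le> ennreal (exp \<epsilon>) * (ennreal (q y) * indicator Y y)"
          using q0 by (auto simp: indicator_def ennreal_mult'[symmetric] intro!: ennreal_leI)
        then show ?thesis by (rule order_trans) simp
      next
        case False
        then have "y \<in> T" using y unfolding T_def by auto
        then have "ennreal (p y) * indicator Y y \<le> ennreal (p y) * indicator T y"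
          by (auto simp: indicator_def)
        then show ?thesis by (rule order_trans) simp
      qed
    qed
    also have "\<dots> = ennreal (exp \<epsilon>) * (\<integral>\<^sup>+y. ennreal (q y) * indicator Y y \<partial>gbase n l) + (\<integral>\<^sup>+y. ennreal (p y) * indicator T y \<partial>gbase n l)"
      using Yb Tm by (subst nn_integral_add) (auto simp: nn_integral_cmult)
    also have "\<dots> = ennreal (exp \<epsilon>) * emeasure (gjoint n l \<sigma> \<mu>') Y + emeasure (gjoint n l \<sigma> \<mu>) T"
      unfolding Pd Qd using Yb Tm by (simp add: emeasure_density)
    finally show ?thesis .
  qed
  have step2: "emeasure (gjoint n l \<sigma> \<mu>) T \<le> ennreal \<delta>"
  proof -
    have Tg: "T \<in> sets (gjoint n l \<sigma> \<mu>)" using Tm sets_gjoint[OF \<sigma>] by auto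
    have "emeasure (gjoint n l \<sigma> \<mu>) T = (\<integral>\<^sup>+y. indicator T y \<partial>gjoint n l \<sigma> \<mu>)"
      using Tg by simp
    also have "\<dots> \<le> (\<integral>\<^sup>+y. ennreal (exp (lam * (SD / (2 * \<sigma>\<^sup>2) - \<epsilon>))) * ennreal (exp (\<Sum>i<n. \<Sum>t<l. (lam * \<Delta> i t / \<sigma>\<^sup>2) * (y i t - \<mu> i t))) \<partial>gjoint n l \<sigma> \<mu>)"
    proof (rule nn_integral_mono)
      fix y
      have eqL: "\<L> y = (\<Sum>i<n. \<Sum>t<l. \<Delta> i t * (y i t - \<mu> i t) / \<sigma>\<^sup>2) + SD / (2 * \<sigma>\<^sup>2)"
        unfolding \<L>_def SD_def by (simp add: sum.distrib sum_divide_distrib)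
      have "exp (lam * (SD / (2 * \<sigma>\<^sup>2) - \<epsilon>)) * exp (\<Sum>i<n. \<Sum>t<l. (lam * \<Delta> i t / \<sigma>\<^sup>2) * (y i t - \<mu> i t)) = exp (lam * (\<L> y - \<epsilon>))"
        unfolding eqL by (simp add: exp_add[symmetric] algebra_simps sum_distrib_left)
      moreover have "indicator T y \<le> ennreal (exp (lam * (\<L> y - \<epsilon>)))"
      proof (cases "y \<in> T")
        case True
        then have "0 \<le> lam * (\<L> y - \<epsilon>)" using lam0 unfolding T_def by auto
        then show ?thesis using True by (simp add: indicator_def)
      qed (simp add: indicator_def)
      ultimately show "indicator T y \<le> ennreal (exp (lam * (SD / (2 * \<sigma>\<^sup>2) - \<epsilon>))) * ennreal (exp (\<Sum>i<n. \<Sum>t<l. (lam * \<Delta> i t / \<sigma>\<^sup>2) * (y i t - \<mu> i t)))"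
        by (simp add: ennreal_mult'[symmetric])
    qed
    also have "\<dots> = ennreal (exp (lam * (SD / (2 * \<sigma>\<^sup>2) - \<epsilon>))) * ennreal (exp (\<Sum>i<n. \<Sum>t<l. (lam * \<Delta> i t / \<sigma>\<^sup>2)\<^sup>2 * \<sigma>\<^sup>2 / 2))"
    proof -
      have m: "(\<lambda>y. ennreal (exp (\<Sum>i<n. \<Sum>t<l. (lam * \<Delta> i t / \<sigma>\<^sup>2) * (y i t - \<mu> i t)))) \<in> borel_measurable (gjoint n l \<sigma> \<mu>)"
      proof -
        have "(\<lambda>y. ennreal (exp (\<Sum>i<n. \<Sum>t<l. (lam * \<Delta> i t / \<sigma>\<^sup>2) * (y i t - \<mu> i t)))) \<in> borel_measurable (gbase n l)"
        proof -
          have "(\<lambda>y. (\<Sum>i<n. \<Sum>t<l. (lam * \<Delta> i t / \<sigma>\<^sup>2) * (y i t - \<mu> i t))) \<in> borel_measurable (gbase n l)"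
            using gbase_comp by (intro borel_measurable_sum borel_measurable_times borel_measurable_diff borel_measurable_const) auto
          then show ?thesis by (intro measurable_compose[OF _ measurable_ennreal] measurable_compose[OF _ borel_measurable_exp])
        qed
        then show ?thesis by (simp only: measurable_cong_sets[OF sets_gjoint[OF \<sigma>] refl])
      qed
      show ?thesis by (subst nn_integral_cmult[OF m]) (simp only: gjoint_mgf[OF \<sigma>])
    qed
    also have "\<dots> = ennreal (exp (lam * (SD / \<sigma>\<^sup>2) / 2 - lam * \<epsilon> + lam\<^sup>2 * (SD / \<sigma>\<^sup>2) / 2))"
    proof -
      have "(\<Sum>i<n. \<Sum>t<l. (lam * \<Delta> i t / \<sigma>\<^sup>2)\<^sup>2 * \<sigma>\<^sup>2 / 2) = lam\<^sup>2 * (SD / \<sigma>\<^sup>2) / 2"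
        unfolding SD_def using \<sigma> by (simp add: sum_distrib_left sum_divide_distrib power2_eq_square field_simps)
      then show ?thesis
        by (simp add: ennreal_mult'[symmetric] exp_add[symmetric] algebra_simps)
    qed
    also have "\<dots> \<le> ennreal (exp (- Lg))"
    proof -
      have x0: "0 \<le> SD / \<sigma>\<^sup>2" unfolding SD_def by (simp add: sum_nonneg)
      have "SD / \<sigma>\<^sup>2 \<le> \<epsilon>\<^sup>2 / (8 * Lg)"
        using D \<sigma> unfolding SD_def \<Delta>_def Lg_def by (simp add: field_simps)
      from exponent_bound[OF Lg e x0 this] show ?thesis unfolding lam_def
        by (intro ennreal_leI) simp
    qed
    also have "\<dots> = ennreal \<delta>" unfolding Lg_def using d by (simp add: ln_div)
    finally show ?thesis .
  qed
  have "emeasure (gjoint n l \<sigma> \<mu>) Y \<le> ennreal (exp \<epsilon>) * emeasure (gjoint n l \<sigma> \<mu>') Y + ennreal \<delta>"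
    using step1 step2 by (meson add_left_mono order_trans)
  also have "\<dots> = ennreal (exp \<epsilon> * measure (gjoint n l \<sigma> \<mu>') Y + \<delta>)"
    using d by (simp add: Q.emeasure_eq_measure ennreal_mult ennreal_plus)
  finally have "ennreal (measure (gjoint n l \<sigma> \<mu>) Y) \<le> ennreal (exp \<epsilon> * measure (gjoint n l \<sigma> \<mu>') Y + \<delta>)"
    by (simp add: P.emeasure_eq_measure)
  then show ?thesis using d by (subst (asm) ennreal_le_iff) (auto intro: add_nonneg_nonneg)
qed



lemma blur_formula:
  assumes s: "1 \<le> s"
  shows "blur_prob s d j = (if j = d div s then 1 - real (d mod s) / real s else 0)
                          + (if j = d div s + 1 then real (d mod s) / real s else 0)"
proof -
  have fl: "\<lfloor>real d / real s\<rfloor> = int (d div s)"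
    by (rule floor_divide_of_nat_eq)
  have fl1: "real_of_int \<lfloor>real d / real s\<rfloor> = real (d div s)" "nat \<lfloor>real d / real s\<rfloor> = d div s"
    unfolding fl by simp_all
  have e: "s * (d div s) + d mod s = d" by (rule mult_div_mod_eq)
  have e2: "real (s * (d div s) + d mod s) = real s * real (d div s) + real (d mod s)" by (simp only: of_nat_add of_nat_mult)
  have "real d = real s * real (d div s) + real (d mod s)" using e2 unfolding e .
  then have q: "real d / real s - real (d div s) = real (d mod s) / real s"
    using s by (simp add: field_simps)
  show ?thesis unfolding blur_prob_def Let_def fl1 q by simp
qed

lemma blur_nonneg:
  assumes s: "1 \<le> s"
  shows "0 \<le> blur_prob s d j"
proof -
  have "real (d mod s) \<le> real s" using s by simp
  then have "real (d mod s) / real s \<le> 1" using s by simp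
  then show ?thesis unfolding blur_formula[OF s] by simp
qed

lemma blur_sum_le:
  assumes s: "1 \<le> s"
  shows "(\<Sum>j<\<nu>. blur_prob s d j) \<le> 1"
proof -
  have m: "real (d mod s) / real s \<le> 1" using s by simp
  have m0: "0 \<le> real (d mod s) / real s" by simp
  have "(\<Sum>j<\<nu>. blur_prob s d j) = (if d div s \<in> {..<\<nu>} then 1 - real (d mod s) / real s else 0)
         + (if d div s + 1 \<in> {..<\<nu>} then real (d mod s) / real s else 0)"
    unfolding blur_formula[OF s] sum.distrib by (simp add: sum.delta')
  also have "\<dots> \<le> 1" using m m0 by auto
  finally show ?thesis .
qed

lemma blur_diff_Suc:
  assumes s: "1 \<le> s"
  shows "blur_prob s d j - blur_prob s (Suc d) j
         = (if j = d div s then 1 / real s else 0) - (if j = d div s + 1 then 1 / real s else 0)"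
proof (cases "d mod s + 1 < s")
  case True
  then have h: "Suc d div s = d div s" "Suc d mod s = d mod s + 1"
    using s by (simp_all add: div_Suc mod_Suc)
  have r: "real (d mod s + 1) / real s = real (d mod s) / real s + 1 / real s"
    using s by (simp add: add_divide_distrib)
  show ?thesis unfolding blur_formula[OF s] h r
    by (cases "j = d div s"; cases "j = d div s + 1") simp_all
next
  case False
  have "d mod s < s" using s by simp
  then have m: "d mod s + 1 = s" using False by linarith
  then have h: "Suc d div s = d div s + 1" "Suc d mod s = 0"
    using s by (simp_all add: div_Suc mod_Suc)
  have r: "real (d mod s) / real s = 1 - 1 / real s"
  proof -
    have "real (d mod s) = real s - 1" using m by (metis add_diff_cancel_right' of_nat_1 of_nat_add)
    then show ?thesis using s by (simp add: diff_divide_distrib)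
  qed
  show ?thesis unfolding blur_formula[OF s] h r
    by (cases "j = d div s"; cases "j = d div s + 1") simp_all
qed

lemma blur_l1_Suc:
  assumes s: "1 \<le> s"
  shows "(\<Sum>j<\<nu>. \<bar>blur_prob s d j - blur_prob s (Suc d) j\<bar>) \<le> 2 / real s"
proof -
  have "(\<Sum>j<\<nu>. \<bar>blur_prob s d j - blur_prob s (Suc d) j\<bar>)
      \<le> (\<Sum>j<\<nu>. (if j = d div s then 1 / real s else 0) + (if j = d div s + 1 then 1 / real s else 0))"
    unfolding blur_diff_Suc[OF s] by (intro sum_mono) auto
  also have "\<dots> \<le> 2 / real s"
  proof -
    have h: "1 / real s + 1 / real s = 2 / real s" "0 \<le> 1 / real s" using s by (simp_all add: field_simps)
    have a: "(\<Sum>j<\<nu>. (if j = d div s then 1 / real s else 0)) \<le> 1 / real s"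
      using h(2) by (simp add: sum.delta')
    have b: "(\<Sum>j<\<nu>. (if j = d div s + 1 then 1 / real s else 0)) \<le> 1 / real s"
      using h(2) by (simp add: sum.delta')
    show ?thesis unfolding sum.distrib using add_mono[OF a b] h(1) by simp
  qed
  finally show ?thesis .
qed

lemma blur_l1_le1:
  assumes s: "1 \<le> s" and d: "d' = d \<or> d' = Suc d \<or> d = Suc d'"
  shows "(\<Sum>j<\<nu>. \<bar>blur_prob s d j - blur_prob s d' j\<bar>) \<le> 2 / real s"
  using d
proof (elim disjE)
  assume "d = Suc d'"
  then show ?thesis using blur_l1_Suc[OF s, where \<nu>=\<nu> and d=d'] by (simp add: abs_minus_commute)
qed (use blur_l1_Suc[OF s] in auto)

lemma blur_l1_any:
  assumes s: "1 \<le> s"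
  shows "(\<Sum>j<\<nu>. \<bar>blur_prob s d j - blur_prob s d' j\<bar>) \<le> 2"
proof -
  have "(\<Sum>j<\<nu>. \<bar>blur_prob s d j - blur_prob s d' j\<bar>) \<le> (\<Sum>j<\<nu>. blur_prob s d j + blur_prob s d' j)"
    using blur_nonneg[OF s] by (intro sum_mono) (simp add: abs_le_iff)
  also have "\<dots> \<le> 2" unfolding sum.distrib using blur_sum_le[OF s, where \<nu>=\<nu> and d=d] blur_sum_le[OF s, where \<nu>=\<nu> and d=d'] by simp
  finally show ?thesis .
qed

lemma nbhd_sub:
  assumes G: "simple_graph n G" and i: "i < n"
  shows "nbhd G i \<subseteq> {..<n} - {i}"
proof
  fix j assume "j \<in> nbhd G i"
  then have e: "{i, j} \<in> G" "j \<noteq> i" by (auto simp: nbhd_def)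
  then obtain a b where "a < n" "b < n" "{i, j} = {a, b}" using G unfolding simple_graph_def by blast
  then have "j < n" by (auto simp: doubleton_eq_iff)
  then show "j \<in> {..<n} - {i}" using e by auto
qed

lemma nbhd_sub':
  assumes G: "simple_graph n G"
  shows "nbhd G i \<subseteq> {..<n}"
proof
  fix j assume "j \<in> nbhd G i"
  then have e: "{i, j} \<in> G" "j \<noteq> i" by (auto simp: nbhd_def)
  then obtain a b where "a < n" "b < n" "{i, j} = {a, b}" using G unfolding simple_graph_def by blast
  then show "j \<in> {..<n}" by (auto simp: doubleton_eq_iff)
qed

lemma deg_less:
  assumes G: "simple_graph n G" and i: "i < n"
  shows "deg G i < n"
proof -
  have "deg G i \<le> card ({..<n} - {i})" unfolding deg_def using nbhd_sub[OF G i] by (intro card_mono) auto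
  also have "\<dots> < n" using i by simp
  finally show ?thesis .
qed

lemma deg_neighbor:
  assumes N: "\<forall>e. v \<notin> e \<longrightarrow> (e \<in> G \<longleftrightarrow> e \<in> G')" and iv: "i \<noteq> v"
    and G: "simple_graph n G" and G': "simple_graph n G'"
  shows "deg G' i = deg G i \<or> deg G' i = Suc (deg G i) \<or> deg G i = Suc (deg G' i)"
proof -
  have eq: "nbhd G i - {v} = nbhd G' i - {v}"
  proof -
    have key: "({i, j} \<in> G) = ({i, j} \<in> G')" if "j \<noteq> v" for j
      using N[rule_format, of "{i, j}"] iv that by auto
    show ?thesis unfolding nbhd_def using key by blast
  qed
  have f: "finite (nbhd G i)" "finite (nbhd G' i)"
    by (rule finite_subset[OF nbhd_sub'[OF G]], simp) (rule finite_subset[OF nbhd_sub'[OF G']], simp)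
  have c: "card A \<le> Suc (card (A - {v}))" "card (A - {v}) \<le> card A" if "finite A" for A :: "nat set"
  proof -
    show "card (A - {v}) \<le> card A" using that by (rule card_mono) auto
    show "card A \<le> Suc (card (A - {v}))"
      using that by (cases "v \<in> A") (simp_all add: card_Diff_singleton_if)
  qed
  note c[OF f(1)] c[OF f(2)]
  then show ?thesis unfolding deg_def eq by linarith
qed

lemma blurry_eq:
  assumes G: "simple_graph n G" and n: "1 \<le> n"
  shows "blurry_deg_dist n s G j = (\<Sum>i<n. blur_prob s (deg G i) j) / real n"
proof -
  have "(\<Sum>i<n. blur_prob s (deg G i) j) = (\<Sum>d<n. \<Sum>i\<in>{i\<in>{..<n}. deg G i = d}. blur_prob s (deg G i) j)"
    using deg_less[OF G] by (subst sum.group[symmetric, where g="deg G"]) auto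
  also have "\<dots> = (\<Sum>d<n. real (card {i. i < n \<and> deg G i = d}) * blur_prob s d j)"
  proof (intro sum.cong refl)
    fix d
    have "(\<Sum>i\<in>{i\<in>{..<n}. deg G i = d}. blur_prob s (deg G i) j) = (\<Sum>i\<in>{i\<in>{..<n}. deg G i = d}. blur_prob s d j)"
      by (intro sum.cong) auto
    also have "\<dots> = real (card {i. i < n \<and> deg G i = d}) * blur_prob s d j"
      by simp
    finally show "(\<Sum>i\<in>{i\<in>{..<n}. deg G i = d}. blur_prob s (deg G i) j) = real (card {i. i < n \<and> deg G i = d}) * blur_prob s d j" .
  qed
  finally have X: "(\<Sum>i<n. blur_prob s (deg G i) j) = (\<Sum>d<n. real (card {i. i < n \<and> deg G i = d}) * blur_prob s d j)" .
  have "blurry_deg_dist n s G j = (\<Sum>d<n. real (card {i. i < n \<and> deg G i = d}) * blur_prob s d j) / real n"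
    unfolding blurry_deg_dist_def degree_distribution_def sum_divide_distrib
    by (intro sum.cong refl) simp
  then show ?thesis using X by simp
qed



lemma weighted_cs:
  fixes c :: "nat \<Rightarrow> real" and R :: "nat \<Rightarrow> nat \<Rightarrow> real"
  assumes col: "\<And>j. j < \<nu> \<Longrightarrow> (\<Sum>t<l. (R t j)\<^sup>2) \<le> r\<^sup>2"
  shows "(\<Sum>t<l. (\<Sum>j<\<nu>. c j * R t j)\<^sup>2) \<le> (\<Sum>j<\<nu>. \<bar>c j\<bar>)\<^sup>2 * r\<^sup>2"
proof -
  have pt: "(\<Sum>j<\<nu>. c j * R t j)\<^sup>2 \<le> (\<Sum>j<\<nu>. \<bar>c j\<bar>) * (\<Sum>j<\<nu>. \<bar>c j\<bar> * (R t j)\<^sup>2)" for t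
  proof -
    define a where "a j = sqrt \<bar>c j\<bar>" for j
    define b where "b j = c j * R t j / sqrt \<bar>c j\<bar>" for j
    have ab: "a j * b j = c j * R t j" for j
      unfolding a_def b_def by (cases "c j = 0") auto
    have a2: "(a j)\<^sup>2 = \<bar>c j\<bar>" for j unfolding a_def by simp
    have b2: "(b j)\<^sup>2 = \<bar>c j\<bar> * (R t j)\<^sup>2" for j
    proof (cases "c j = 0")
      case False
      have s1: "(b j)\<^sup>2 = (c j * R t j)\<^sup>2 / \<bar>c j\<bar>" unfolding b_def by (simp add: power_divide)
      have s2: "(c j * R t j)\<^sup>2 = \<bar>c j\<bar> * (\<bar>c j\<bar> * (R t j)\<^sup>2)"
        by (simp add: power_mult_distrib power2_eq_square abs_mult_self_eq)
      have s3: "\<bar>c j\<bar> * (\<bar>c j\<bar> * (R t j)\<^sup>2) / \<bar>c j\<bar> = \<bar>c j\<bar> * (R t j)\<^sup>2"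
        using False by simp
      show ?thesis unfolding s1 s2 s3 ..
    qed (simp add: b_def)
    show ?thesis using Cauchy_Schwarz_ineq_sum[of a b "{..<\<nu>}"] unfolding ab a2 b2 .
  qed
  have "(\<Sum>t<l. (\<Sum>j<\<nu>. c j * R t j)\<^sup>2) \<le> (\<Sum>t<l. (\<Sum>j<\<nu>. \<bar>c j\<bar>) * (\<Sum>j<\<nu>. \<bar>c j\<bar> * (R t j)\<^sup>2))"
    by (intro sum_mono pt)
  also have "\<dots> = (\<Sum>j<\<nu>. \<bar>c j\<bar>) * (\<Sum>t<l. \<Sum>j<\<nu>. \<bar>c j\<bar> * (R t j)\<^sup>2)"
    by (rule sum_distrib_left[symmetric])
  also have "\<dots> = (\<Sum>j<\<nu>. \<bar>c j\<bar>) * (\<Sum>j<\<nu>. \<Sum>t<l. \<bar>c j\<bar> * (R t j)\<^sup>2)"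
    by (subst sum.swap) (rule refl)
  also have "\<dots> = (\<Sum>j<\<nu>. \<bar>c j\<bar>) * (\<Sum>j<\<nu>. \<bar>c j\<bar> * (\<Sum>t<l. (R t j)\<^sup>2))"
    by (simp only: sum_distrib_left)
  also have "\<dots> \<le> (\<Sum>j<\<nu>. \<bar>c j\<bar>) * (\<Sum>j<\<nu>. \<bar>c j\<bar> * r\<^sup>2)"
    using col by (intro mult_left_mono sum_mono) (auto simp: sum_nonneg)
  also have "\<dots> = (\<Sum>j<\<nu>. \<bar>c j\<bar>)\<^sup>2 * r\<^sup>2"
    by (simp add: sum_distrib_right[symmetric] power2_eq_square)
  finally show ?thesis .
qed

lemma cs_abs:
  fixes a b :: "nat \<Rightarrow> real"
  shows "\<bar>\<Sum>t<l. a t * b t\<bar> \<le> sqrt (\<Sum>t<l. (a t)\<^sup>2) * sqrt (\<Sum>t<l. (b t)\<^sup>2)"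
proof -
  have "(\<Sum>t<l. a t * b t)\<^sup>2 \<le> (\<Sum>t<l. (a t)\<^sup>2) * (\<Sum>t<l. (b t)\<^sup>2)"
    by (rule Cauchy_Schwarz_ineq_sum)
  then have "sqrt ((\<Sum>t<l. a t * b t)\<^sup>2) \<le> sqrt ((\<Sum>t<l. (a t)\<^sup>2) * (\<Sum>t<l. (b t)\<^sup>2))"
    by (rule real_sqrt_le_mono)
  then show ?thesis by (simp add: real_sqrt_mult)
qed

lemma norm_2_inf_ge:
  assumes "i < m"
  shows "sqrt (\<Sum>j<p. (A i j)\<^sup>2) \<le> norm_2_inf m p A"
  unfolding norm_2_inf_def using assms by (intro Max_ge) auto

lemma norm_1_2_ge:
  assumes "j < p"
  shows "sqrt (\<Sum>i<m. (A i j)\<^sup>2) \<le> norm_1_2 m p A"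
  unfolding norm_1_2_def using assms by (intro Max_ge) auto

lemma norm_1_inf_ge:
  assumes "i < m" "j < p"
  shows "\<bar>A i j\<bar> \<le> norm_1_inf m p A"
proof -
  have "{\<bar>A i j\<bar> |i j. i < m \<and> j < p} = (\<lambda>(i,j). \<bar>A i j\<bar>) ` ({..<m} \<times> {..<p})" by auto
  then have "finite {\<bar>A i j\<bar> |i j. i < m \<and> j < p}" by simp
  then show ?thesis unfolding norm_1_inf_def using assms by (intro Max_ge) auto
qed

lemma norm_2_inf_nonneg:
  assumes "0 < m"
  shows "0 \<le> norm_2_inf m p A"
proof -
  have "0 \<le> sqrt (\<Sum>j<p. (A 0 j)\<^sup>2)" by (intro real_sqrt_ge_zero sum_nonneg) simp
  then show ?thesis using norm_2_inf_ge[OF assms, where p=p and A=A] by linarith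
qed

lemma norm_1_2_nonneg:
  assumes "0 < p"
  shows "0 \<le> norm_1_2 m p A"
proof -
  have "0 \<le> sqrt (\<Sum>i<m. (A i 0)\<^sup>2)" by (intro real_sqrt_ge_zero sum_nonneg) simp
  then show ?thesis using norm_1_2_ge[OF assms, where m=m and A=A] by linarith
qed



lemma expmax:
  fixes M :: "'a measure" and Z :: "nat \<Rightarrow> 'a \<Rightarrow> real" and F :: "'a \<Rightarrow> real"
  assumes P: "prob_space M" and k: "2 \<le> k" and lam: "0 < lam" and v: "0 \<le> v" and eta: "0 \<le> \<eta>"
    and Zm: "\<And>j. j < k \<Longrightarrow> Z j \<in> borel_measurable M"
    and mgf: "\<And>j. j < k \<Longrightarrow> (\<integral>\<^sup>+x. ennreal (exp (lam * Z j x)) \<partial>M) \<le> ennreal (exp (lam\<^sup>2 * v / 2))"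
    and mgf': "\<And>j. j < k \<Longrightarrow> (\<integral>\<^sup>+x. ennreal (exp (- lam * Z j x)) \<partial>M) \<le> ennreal (exp (lam\<^sup>2 * v / 2))"
    and F: "\<And>x. x \<in> space M \<Longrightarrow> F x \<le> \<eta> + Max {\<bar>Z j x\<bar> | j. j < k}"
  shows "(\<integral>\<^sup>+x. ennreal (F x) \<partial>M) \<le> ennreal (\<eta> + (ln (2 * real k) + lam\<^sup>2 * v / 2) / lam)"
proof -
  interpret prob_space M by (rule P)
  define E where "E = exp (lam\<^sup>2 * v / 2)"
  define B where "B = 2 * real k * E"
  define S where "S x = (\<Sum>j<k. exp (lam * Z j x) + exp (- lam * Z j x))" for x
  have E0: "0 < E" unfolding E_def by simp
  have B0: "0 < B" unfolding B_def using E0 k by simp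
  have lnB: "ln B = ln (2 * real k) + lam\<^sup>2 * v / 2"
    unfolding B_def E_def using k by (simp add: ln_mult)
  have lnB1: "1 \<le> ln B"
  proof -
    have "ln 4 \<le> ln (2 * real k)" using k by (subst ln_le_cancel_iff) auto
    moreover have "ln (4::real) = 2 * ln 2" using ln_realpow[of 2 2] by simp
    moreover have "0 \<le> lam\<^sup>2 * v / 2" using v by simp
    ultimately show ?thesis unfolding lnB using ln2_ge_two_thirds by linarith
  qed
  have Zm'[measurable]: "Z j \<in> borel_measurable M" if "j \<in> {..<k}" for j using Zm that by simp
  have Sm: "S \<in> borel_measurable M" unfolding S_def by measurable
  have S0: "0 < S x" for x
  proof -
    have "0 < (\<Sum>j<k. exp (lam * Z j x) + exp (- lam * Z j x))"
    proof (intro sum_pos)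
      have "0 \<in> {..<k}" using k by simp
      then show "{..<k} \<noteq> {}" by blast
    qed (auto intro: add_pos_pos)
    then show ?thesis unfolding S_def .
  qed
  have Fpt: "F x \<le> (\<eta> + (ln B - 1) / lam) + S x / (lam * B)" if x: "x \<in> space M" for x
  proof -
    have ZS: "lam * \<bar>Z j x\<bar> \<le> ln (S x)" if j: "j < k" for j
    proof -
      have t: "exp (lam * \<bar>Z j x\<bar>) \<le> exp (lam * Z j x) + exp (- lam * Z j x)"
        by (cases "0 \<le> Z j x") (auto simp: add_increasing2 add_increasing)
      also have "\<dots> \<le> S x" unfolding S_def
        using j by (intro member_le_sum[of j "{..<k}" "\<lambda>j. exp (lam * Z j x) + exp (- lam * Z j x)"]) (auto intro: add_nonneg_nonneg)
      finally have "exp (lam * \<bar>Z j x\<bar>) \<le> S x" .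
      then show ?thesis using S0 by (metis ln_exp ln_le_cancel_iff exp_gt_zero)
    qed
    have "Max {\<bar>Z j x\<bar> | j. j < k} \<le> ln (S x) / lam"
    proof (subst Max_le_iff)
      show "finite {\<bar>Z j x\<bar> | j. j < k}" by simp
      have "\<bar>Z 0 x\<bar> \<in> {\<bar>Z j x\<bar> | j. j < k}" using k by auto
      then show "{\<bar>Z j x\<bar> | j. j < k} \<noteq> {}" by blast
      show "\<forall>a\<in>{\<bar>Z j x\<bar> |j. j < k}. a \<le> ln (S x) / lam"
        using ZS lam by (auto simp: field_simps)
    qed
    moreover have "ln (S x) \<le> ln B - 1 + S x / B"
    proof -
      have "ln (S x / B) \<le> S x / B - 1" using S0 B0 by (intro ln_le_minus_one) simp
      moreover have "ln (S x / B) = ln (S x) - ln B" using S0[of x] B0 by (simp add: ln_div)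
      ultimately show ?thesis by linarith
    qed
    moreover have "ln (S x) / lam \<le> (ln B - 1 + S x / B) / lam"
      using calculation(2) lam by (intro divide_right_mono) auto
    ultimately have "Max {\<bar>Z j x\<bar> | j. j < k} \<le> (ln B - 1 + S x / B) / lam"
      by linarith
    also have "\<dots> = (ln B - 1) / lam + S x / (lam * B)"
      using lam B0 by (simp add: field_simps)
    finally show ?thesis using F[OF x] by linarith
  qed
  define c0 where "c0 = \<eta> + (ln B - 1) / lam"
  have c00: "0 \<le> c0" unfolding c0_def using lnB1 lam eta by simp
  have "(\<integral>\<^sup>+x. ennreal (F x) \<partial>M) \<le> (\<integral>\<^sup>+x. ennreal c0 + ennreal (1 / (lam * B)) * ennreal (S x) \<partial>M)"
  proof (rule nn_integral_mono)
    fix x assume x: "x \<in> space M"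
    have "ennreal (F x) \<le> ennreal (c0 + S x / (lam * B))"
      using Fpt[OF x] unfolding c0_def by (rule ennreal_leI)
    also have "\<dots> = ennreal c0 + ennreal (1 / (lam * B)) * ennreal (S x)"
    proof -
      have a: "S x / (lam * B) = (1 / (lam * B)) * S x" by simp
      have b: "0 \<le> 1 / (lam * B)" "0 \<le> S x" using lam B0 S0[of x] by auto
      have c: "0 \<le> S x / (lam * B)" using lam B0 S0[of x] by auto
      show ?thesis using c00 c b unfolding a by (simp only: ennreal_plus ennreal_mult)
    qed
    finally show "ennreal (F x) \<le> ennreal c0 + ennreal (1 / (lam * B)) * ennreal (S x)" .
  qed
  also have "\<dots> = ennreal c0 + ennreal (1 / (lam * B)) * (\<integral>\<^sup>+x. ennreal (S x) \<partial>M)"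
    using Sm by (simp add: nn_integral_add nn_integral_cmult emeasure_space_1)
  also have "(\<integral>\<^sup>+x. ennreal (S x) \<partial>M) \<le> ennreal B"
  proof -
    have "(\<integral>\<^sup>+x. ennreal (S x) \<partial>M) = (\<integral>\<^sup>+x. (\<Sum>j<k. ennreal (exp (lam * Z j x)) + ennreal (exp (- lam * Z j x))) \<partial>M)"
      unfolding S_def by (intro nn_integral_cong) (simp add: sum_ennreal[symmetric] ennreal_plus)
    also have "\<dots> = (\<Sum>j<k. (\<integral>\<^sup>+x. ennreal (exp (lam * Z j x)) \<partial>M) + (\<integral>\<^sup>+x. ennreal (exp (- lam * Z j x)) \<partial>M))"
      using Zm by (subst nn_integral_sum) (auto intro!: sum.cong nn_integral_add)
    also have "\<dots> \<le> (\<Sum>j<k. ennreal E + ennreal E)"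
      using mgf mgf' unfolding E_def by (intro sum_mono add_mono) auto
    also have "\<dots> = ennreal B"
    proof -
      have "ennreal E + ennreal E = ennreal (2 * E)" using E0 by (subst ennreal_plus[symmetric]) auto
      then have "(\<Sum>j<k. ennreal E + ennreal E) = of_nat k * ennreal (2 * E)" by simp
      also have "\<dots> = ennreal (real k * (2 * E))" using E0 by (simp add: ennreal_of_nat_eq_real_of_nat ennreal_mult)
      also have "real k * (2 * E) = B" unfolding B_def by simp
      finally show ?thesis .
    qed
    finally show ?thesis .
  qed
  then have "ennreal c0 + ennreal (1 / (lam * B)) * (\<integral>\<^sup>+x. ennreal (S x) \<partial>M) \<le> ennreal c0 + ennreal (1 / (lam * B)) * ennreal B"
    by (intro add_left_mono mult_left_mono) auto
  also have "\<dots> = ennreal (\<eta> + (ln (2 * real k) + lam\<^sup>2 * v / 2) / lam)"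
  proof -
    have "ennreal (1 / (lam * B)) * ennreal B = ennreal (1 / lam)"
      using lam B0 by (simp add: ennreal_mult[symmetric])
    moreover have "c0 + 1 / lam = \<eta> + (ln (2 * real k) + lam\<^sup>2 * v / 2) / lam"
      unfolding c0_def lnB[symmetric] using lam by (simp add: field_simps)
    moreover have "ennreal c0 + ennreal (1 / lam) = ennreal (c0 + 1 / lam)" using c00 lam by (subst ennreal_plus) auto
    ultimately show ?thesis by simp
  qed
  finally show ?thesis .
qed



definition Uvec :: "nat \<Rightarrow> nat \<Rightarrow> (nat \<Rightarrow> nat \<Rightarrow> real) \<Rightarrow> nat set \<Rightarrow> nat \<Rightarrow> real" where
  "Uvec \<nu> s Rm S t = (\<Sum>j<\<nu>. Rm t j * blur_prob s (card S) j)"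

definition post :: "nat \<Rightarrow> nat \<Rightarrow> nat \<Rightarrow> (nat \<Rightarrow> nat \<Rightarrow> real) \<Rightarrow> (nat \<Rightarrow> nat \<Rightarrow> real) \<Rightarrow> nat \<Rightarrow> real" where
  "post n l k Lm y j = (if j < k then (\<Sum>i<n. \<Sum>t<l. Lm j t * y i t) / real n else 0)"

definition prho :: "(nat \<Rightarrow> real) measure" where
  "prho = return (count_space UNIV) (\<lambda>_. 0)"

lemma node_outputs_eq:
  "node_outputs n (\<lambda>\<rho> i S. gnode l \<sigma> (Uvec \<nu> s Rm S)) \<rho> G = gjoint n l \<sigma> (\<lambda>i. Uvec \<nu> s Rm (nbhd G i))"
  unfolding node_outputs_def gjoint_def by simp

lemma post_measurable:
  "post n l k Lm \<in> measurable (PiM {..<n} (\<lambda>_. PiM {..<l} (\<lambda>_. borel))) vec_space"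
  unfolding vec_space_def
proof (rule measurable_PiM_single')
  fix j :: nat
  have c[measurable]: "(\<lambda>y. y i t) \<in> borel_measurable (PiM {..<n} (\<lambda>_. PiM {..<l} (\<lambda>_. borel)))"
    if "i \<in> {..<n}" "t \<in> {..<l}" for i t
    by (rule measurable_comp2) (use that in auto)
  show "(\<lambda>y. post n l k Lm y j) \<in> borel_measurable (PiM {..<n} (\<lambda>_. PiM {..<l} (\<lambda>_. borel)))"
    unfolding post_def by measurable
qed auto

lemma kernel_in_space:
  assumes "0 < \<sigma>"
  shows "distr (gjoint n l \<sigma> \<mu>) vec_space (post n l k Lm) \<in> space (subprob_algebra vec_space)"
proof -
  interpret prob_space "gjoint n l \<sigma> \<mu>" by (rule prob_space_gjoint[OF assms])
  have m: "post n l k Lm \<in> measurable (gjoint n l \<sigma> \<mu>) vec_space"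
    using post_measurable unfolding gjoint_def
    by (subst measurable_cong_sets[OF sets_PiM_cong[OF refl] refl]) (auto simp: sets_gnode)
  show ?thesis unfolding space_subprob_algebra
    using prob_space_distr[OF m] prob_space_imp_subprob_space by auto
qed

lemma sens_bound:
  assumes s: "1 \<le> s" and col: "\<And>j. j < \<nu> \<Longrightarrow> (\<Sum>t<l. (Rm t j)\<^sup>2) \<le> r\<^sup>2"
    and G: "simple_graph n G" and G': "simple_graph n G'"
    and N: "\<forall>e. v \<notin> e \<longrightarrow> (e \<in> G \<longleftrightarrow> e \<in> G')"
  shows "(\<Sum>i<n. \<Sum>t<l. (Uvec \<nu> s Rm (nbhd G i) t - Uvec \<nu> s Rm (nbhd G' i) t)\<^sup>2) \<le> r\<^sup>2 * (4 + 4 * real n / (real s)\<^sup>2)"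
proof -
  have pt: "(\<Sum>t<l. (Uvec \<nu> s Rm (nbhd G i) t - Uvec \<nu> s Rm (nbhd G' i) t)\<^sup>2)
            \<le> r\<^sup>2 * (4 / (real s)\<^sup>2 + (if i = v then 4 else 0))" for i
  proof -
    define c where "c j = blur_prob s (deg G i) j - blur_prob s (deg G' i) j" for j
    have eq: "Uvec \<nu> s Rm (nbhd G i) t - Uvec \<nu> s Rm (nbhd G' i) t = (\<Sum>j<\<nu>. c j * Rm t j)" for t
      unfolding Uvec_def c_def deg_def by (simp add: sum_subtractf[symmetric] algebra_simps)
    have c0: "0 \<le> (\<Sum>j<\<nu>. \<bar>c j\<bar>)" by (simp add: sum_nonneg)
    have cb: "(\<Sum>j<\<nu>. \<bar>c j\<bar>)\<^sup>2 \<le> 4 / (real s)\<^sup>2 + (if i = v then 4 else 0)"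
    proof (cases "i = v")
      case True
      have "(\<Sum>j<\<nu>. \<bar>c j\<bar>) \<le> 2" unfolding c_def by (rule blur_l1_any[OF s])
      then have "(\<Sum>j<\<nu>. \<bar>c j\<bar>)\<^sup>2 \<le> 2\<^sup>2" using c0 by (intro power_mono) auto
      then show ?thesis using True by (simp only: if_True) (intro add_increasing, simp_all)
    next
      case False
      have "(\<Sum>j<\<nu>. \<bar>c j\<bar>) \<le> 2 / real s" unfolding c_def
        using blur_l1_le1[OF s] deg_neighbor[OF N False G G'] by blast
      then have "(\<Sum>j<\<nu>. \<bar>c j\<bar>)\<^sup>2 \<le> (2 / real s)\<^sup>2" using c0 by (intro power_mono) auto
      then show ?thesis using False by (simp add: power_divide)
    qed
    have "(\<Sum>t<l. (Uvec \<nu> s Rm (nbhd G i) t - Uvec \<nu> s Rm (nbhd G' i) t)\<^sup>2) = (\<Sum>t<l. (\<Sum>j<\<nu>. c j * Rm t j)\<^sup>2)"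
      unfolding eq ..
    also have "\<dots> \<le> (\<Sum>j<\<nu>. \<bar>c j\<bar>)\<^sup>2 * r\<^sup>2" by (rule weighted_cs[OF col])
    also have "\<dots> \<le> (4 / (real s)\<^sup>2 + (if i = v then 4 else 0)) * r\<^sup>2"
      using cb by (intro mult_right_mono) auto
    finally show ?thesis by (simp add: mult.commute)
  qed
  have "(\<Sum>i<n. \<Sum>t<l. (Uvec \<nu> s Rm (nbhd G i) t - Uvec \<nu> s Rm (nbhd G' i) t)\<^sup>2)
      \<le> (\<Sum>i<n. r\<^sup>2 * (4 / (real s)\<^sup>2 + (if i = v then 4 else 0)))"
    by (intro sum_mono pt)
  also have "\<dots> = r\<^sup>2 * (real n * (4 / (real s)\<^sup>2) + (if v < n then 4 else 0))"
    by (simp add: sum_distrib_left[symmetric] sum.distrib sum.delta)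
  also have "\<dots> \<le> r\<^sup>2 * (4 + 4 * real n / (real s)\<^sup>2)"
  proof (intro mult_left_mono)
    have "real n * (4 / (real s)\<^sup>2) = 4 * real n / (real s)\<^sup>2" by simp
    moreover have "0 \<le> 4 * real n / (real s)\<^sup>2" by simp
    ultimately show "real n * (4 / (real s)\<^sup>2) + (if v < n then 4 else 0) \<le> 4 + 4 * real n / (real s)\<^sup>2"
      by (cases "v < n") (simp_all only: if_True if_False; linarith)+
  qed simp
  finally show ?thesis .
qed

lemma mech_LNDP:
  assumes \<sigma>: "0 < \<sigma>" and e: "0 < \<epsilon>" "\<epsilon> \<le> 1" and d: "0 < \<delta>" "\<delta> \<le> 1/2" and s: "1 \<le> s"
    and col: "\<And>j. j < \<nu> \<Longrightarrow> (\<Sum>t<l. (Rm t j)\<^sup>2) \<le> r\<^sup>2"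
    and cond: "r\<^sup>2 * (4 + 4 * real n / (real s)\<^sup>2) \<le> \<sigma>\<^sup>2 * \<epsilon>\<^sup>2 / (8 * ln (1/\<delta>))"
  shows "LNDP \<epsilon> \<delta> n prho (PiM {..<l} (\<lambda>_. borel)) (\<lambda>\<rho> i S. gnode l \<sigma> (Uvec \<nu> s Rm S)) (post n l k Lm) vec_space"
  unfolding LNDP_def
proof (intro conjI ballI allI impI)
  show "prob_space prho" unfolding prho_def by (rule prob_space_return) simp
next
  fix \<rho> i S
  show "gnode l \<sigma> (Uvec \<nu> s Rm S) \<in> space (prob_algebra (Pi\<^sub>M {..<l} (\<lambda>_. borel)))"
    unfolding space_prob_algebra using sets_gnode prob_space_gnode[OF \<sigma>] by auto
next
  show "post n l k Lm \<in> Pi\<^sub>M {..<n} (\<lambda>_. Pi\<^sub>M {..<l} (\<lambda>_. borel)) \<rightarrow>\<^sub>M vec_space"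
    by (rule post_measurable)
next
  fix G :: "nat set set"
  show "(\<lambda>\<rho>. distr (node_outputs n (\<lambda>\<rho> i S. gnode l \<sigma> (Uvec \<nu> s Rm S)) \<rho> G) vec_space (post n l k Lm)) \<in> prho \<rightarrow>\<^sub>M subprob_algebra vec_space"
    unfolding node_outputs_eq by (rule measurable_const) (rule kernel_in_space[OF \<sigma>])
next
  fix \<rho> G G'
  assume "simple_graph n G \<and> simple_graph n G' \<and> node_neighbors n G G'"
  then have G: "simple_graph n G" and G': "simple_graph n G'" and "node_neighbors n G G'" by auto
  then obtain v where N: "\<forall>e. v \<notin> e \<longrightarrow> (e \<in> G \<longleftrightarrow> e \<in> G')" unfolding node_neighbors_def by auto
  have N': "\<forall>e. v \<notin> e \<longrightarrow> (e \<in> G' \<longleftrightarrow> e \<in> G)" using N by auto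
  have D1: "(\<Sum>i<n. \<Sum>t<l. (Uvec \<nu> s Rm (nbhd G i) t - Uvec \<nu> s Rm (nbhd G' i) t)\<^sup>2) \<le> \<sigma>\<^sup>2 * \<epsilon>\<^sup>2 / (8 * ln (1/\<delta>))"
    using sens_bound[where \<nu>=\<nu> and l=l and Rm=Rm and r=r, OF s col G G' N] cond by linarith
  have D2: "(\<Sum>i<n. \<Sum>t<l. (Uvec \<nu> s Rm (nbhd G' i) t - Uvec \<nu> s Rm (nbhd G i) t)\<^sup>2) \<le> \<sigma>\<^sup>2 * \<epsilon>\<^sup>2 / (8 * ln (1/\<delta>))"
    using sens_bound[where \<nu>=\<nu> and l=l and Rm=Rm and r=r, OF s col G' G N'] cond by linarith
  have S: "sets (gjoint n l \<sigma> (\<lambda>i. Uvec \<nu> s Rm (nbhd G i))) = sets (gjoint n l \<sigma> (\<lambda>i. Uvec \<nu> s Rm (nbhd G' i)))"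
    using sets_gjoint[OF \<sigma>] by simp
  show "indist \<epsilon> \<delta> (node_outputs n (\<lambda>\<rho> i S. gnode l \<sigma> (Uvec \<nu> s Rm S)) \<rho> G) (node_outputs n (\<lambda>\<rho> i S. gnode l \<sigma> (Uvec \<nu> s Rm S)) \<rho> G')"
    unfolding node_outputs_eq indist_def
  proof (intro conjI ballI)
    fix Y assume "Y \<in> sets (gjoint n l \<sigma> (\<lambda>i. Uvec \<nu> s Rm (nbhd G i)))"
    then show "measure (gjoint n l \<sigma> (\<lambda>i. Uvec \<nu> s Rm (nbhd G i))) Y \<le> exp \<epsilon> * measure (gjoint n l \<sigma> (\<lambda>i. Uvec \<nu> s Rm (nbhd G' i))) Y + \<delta>"
      by (rule gjoint_priv[OF \<sigma> e d D1])
  next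
    fix Y assume "Y \<in> sets (gjoint n l \<sigma> (\<lambda>i. Uvec \<nu> s Rm (nbhd G' i)))"
    then show "measure (gjoint n l \<sigma> (\<lambda>i. Uvec \<nu> s Rm (nbhd G' i))) Y \<le> exp \<epsilon> * measure (gjoint n l \<sigma> (\<lambda>i. Uvec \<nu> s Rm (nbhd G i))) Y + \<delta>"
      by (rule gjoint_priv[OF \<sigma> e d D2])
  qed
qed



definition Zerr :: "nat \<Rightarrow> nat \<Rightarrow> (nat \<Rightarrow> nat \<Rightarrow> real) \<Rightarrow> (nat \<Rightarrow> nat \<Rightarrow> real) \<Rightarrow> nat \<Rightarrow> (nat \<Rightarrow> nat \<Rightarrow> real) \<Rightarrow> real" where
  "Zerr n l Lm \<mu> j y = (\<Sum>i<n. \<Sum>t<l. (Lm j t / real n) * (y i t - \<mu> i t))"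

lemma swap3:
  fixes f :: "nat \<Rightarrow> nat \<Rightarrow> nat \<Rightarrow> real"
  shows "(\<Sum>i<n. \<Sum>t<l. \<Sum>j<\<nu>. f i t j) = (\<Sum>j<\<nu>. \<Sum>t<l. \<Sum>i<n. f i t j)"
proof -
  have "(\<Sum>i<n. \<Sum>t<l. \<Sum>j<\<nu>. f i t j) = (\<Sum>t<l. \<Sum>i<n. \<Sum>j<\<nu>. f i t j)" by (rule sum.swap)
  also have "\<dots> = (\<Sum>t<l. \<Sum>j<\<nu>. \<Sum>i<n. f i t j)" by (intro sum.cong refl sum.swap)
  also have "\<dots> = (\<Sum>j<\<nu>. \<Sum>t<l. \<Sum>i<n. f i t j)" by (rule sum.swap)
  finally show ?thesis .
qed

lemma swap3':
  fixes f :: "nat \<Rightarrow> nat \<Rightarrow> nat \<Rightarrow> real"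
  shows "(\<Sum>i<n. \<Sum>t<l. \<Sum>j<\<nu>. f i t j) = (\<Sum>j<\<nu>. \<Sum>i<n. \<Sum>t<l. f i t j)"
proof -
  have "(\<Sum>i<n. \<Sum>t<l. \<Sum>j<\<nu>. f i t j) = (\<Sum>i<n. \<Sum>j<\<nu>. \<Sum>t<l. f i t j)" by (intro sum.cong refl sum.swap)
  also have "\<dots> = (\<Sum>j<\<nu>. \<Sum>i<n. \<Sum>t<l. f i t j)" by (rule sum.swap)
  finally show ?thesis .
qed

lemma mean_eq:
  assumes G: "simple_graph n G" and n: "1 \<le> n"
  shows "(\<Sum>i<n. \<Sum>t<l. Lm j t * Uvec \<nu> s Rm (nbhd G i) t) / real n
       = (\<Sum>j'<\<nu>. mat_mult l Lm Rm j j' * blurry_deg_dist n s G j')"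
proof -
  have "(\<Sum>i<n. \<Sum>t<l. Lm j t * Uvec \<nu> s Rm (nbhd G i) t) = (\<Sum>i<n. \<Sum>t<l. \<Sum>j'<\<nu>. Lm j t * Rm t j' * blur_prob s (deg G i) j')"
    unfolding Uvec_def deg_def by (simp add: sum_distrib_left mult.assoc)
  also have "\<dots> = (\<Sum>j'<\<nu>. \<Sum>i<n. \<Sum>t<l. Lm j t * Rm t j' * blur_prob s (deg G i) j')" by (rule swap3')
  also have "\<dots> = (\<Sum>j'<\<nu>. mat_mult l Lm Rm j j' * (\<Sum>i<n. blur_prob s (deg G i) j'))"
    unfolding mat_mult_def by (simp add: sum_distrib_left sum_distrib_right)
  finally have X: "(\<Sum>i<n. \<Sum>t<l. Lm j t * Uvec \<nu> s Rm (nbhd G i) t) = (\<Sum>j'<\<nu>. mat_mult l Lm Rm j j' * (\<Sum>i<n. blur_prob s (deg G i) j'))" .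
  show ?thesis unfolding blurry_eq[OF G n] X sum_divide_distrib[of _ "{..<\<nu>}"]
    by (intro sum.cong refl) simp
qed

lemma blurry_nonneg: "simple_graph n G \<Longrightarrow> 1 \<le> n \<Longrightarrow> 1 \<le> s \<Longrightarrow> 0 \<le> blurry_deg_dist n s G j"
  by (simp add: blurry_eq blur_nonneg sum_nonneg)

lemma blurry_sum_le: 
  assumes G: "simple_graph n G" and n: "1 \<le> n" and s: "1 \<le> s"
  shows "(\<Sum>j<\<nu>. blurry_deg_dist n s G j) \<le> 1"
proof -
  have "(\<Sum>j<\<nu>. blurry_deg_dist n s G j) = (\<Sum>i<n. \<Sum>j<\<nu>. blur_prob s (deg G i) j) / real n"
    unfolding blurry_eq[OF G n] by (simp add: sum_divide_distrib[symmetric] sum.swap[of _ "{..<\<nu>}"])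
  also have "\<dots> \<le> (\<Sum>i<n. 1) / real n"
    using blur_sum_le[OF s] by (intro divide_right_mono sum_mono) auto
  also have "\<dots> = 1" using n by simp
  finally show ?thesis .
qed

lemma pointwise_err:
  assumes n: "1 \<le> n" and s: "1 \<le> s" and k: "2 \<le> k" and G: "simple_graph n G" and eta: "0 \<le> \<eta>"
    and approx: "\<And>j j'. j < k \<Longrightarrow> j' < \<nu> \<Longrightarrow> \<bar>mat_mult l Lm Rm j j' - W j j'\<bar> \<le> \<eta>"
  shows "sup_err k (post n l k Lm y) (\<lambda>i. \<Sum>j<\<nu>. W i j * blurry_deg_dist n s G j)
       \<le> \<eta> + Max {\<bar>Zerr n l Lm (\<lambda>i. Uvec \<nu> s Rm (nbhd G i)) j y\<bar> | j. j < k}"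
proof -
  define \<mu> where "\<mu> = (\<lambda>i. Uvec \<nu> s Rm (nbhd G i))"
  define MZ where "MZ = Max {\<bar>Zerr n l Lm \<mu> j y\<bar> | j. j < k}"
  have each: "\<bar>post n l k Lm y j - (\<Sum>j'<\<nu>. W j j' * blurry_deg_dist n s G j')\<bar> \<le> \<eta> + MZ" if j: "j < k" for j
  proof -
    have p: "post n l k Lm y j = (\<Sum>i<n. \<Sum>t<l. Lm j t * \<mu> i t) / real n + Zerr n l Lm \<mu> j y"
      unfolding post_def Zerr_def using j n
      by (simp add: sum_divide_distrib[symmetric] sum.distrib[symmetric] algebra_simps diff_divide_distrib add_divide_distrib sum_subtractf)
    have m: "(\<Sum>i<n. \<Sum>t<l. Lm j t * \<mu> i t) / real n = (\<Sum>j'<\<nu>. mat_mult l Lm Rm j j' * blurry_deg_dist n s G j')"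
      unfolding \<mu>_def by (rule mean_eq[OF G n])
    have d: "\<bar>(\<Sum>j'<\<nu>. mat_mult l Lm Rm j j' * blurry_deg_dist n s G j') - (\<Sum>j'<\<nu>. W j j' * blurry_deg_dist n s G j')\<bar> \<le> \<eta>"
    proof -
      have "\<bar>(\<Sum>j'<\<nu>. mat_mult l Lm Rm j j' * blurry_deg_dist n s G j') - (\<Sum>j'<\<nu>. W j j' * blurry_deg_dist n s G j')\<bar>
          = \<bar>\<Sum>j'<\<nu>. (mat_mult l Lm Rm j j' - W j j') * blurry_deg_dist n s G j'\<bar>"
        by (simp add: sum_subtractf[symmetric] left_diff_distrib)
      also have "\<dots> \<le> (\<Sum>j'<\<nu>. \<bar>(mat_mult l Lm Rm j j' - W j j') * blurry_deg_dist n s G j'\<bar>)"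
        by (rule sum_abs)
      also have "\<dots> \<le> (\<Sum>j'<\<nu>. \<eta> * blurry_deg_dist n s G j')"
        using approx[OF j] blurry_nonneg[OF G n s]
        by (intro sum_mono) (auto simp: abs_mult intro: mult_right_mono)
      also have "\<dots> = \<eta> * (\<Sum>j'<\<nu>. blurry_deg_dist n s G j')" by (simp add: sum_distrib_left)
      also have "\<dots> \<le> \<eta> * 1" using blurry_sum_le[OF G n s] eta by (intro mult_left_mono) auto
      finally show ?thesis by simp
    qed
    have z: "\<bar>Zerr n l Lm \<mu> j y\<bar> \<le> MZ" unfolding MZ_def using j by (intro Max_ge) auto
    show ?thesis unfolding p m using d z by linarith
  qed
  show ?thesis unfolding sup_err_def
  proof (subst Max_le_iff)
    show "finite {\<bar>post n l k Lm y i - (\<Sum>j<\<nu>. W i j * blurry_deg_dist n s G j)\<bar> |i. i < k}" by simp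
    have "\<bar>post n l k Lm y 0 - (\<Sum>j<\<nu>. W 0 j * blurry_deg_dist n s G j)\<bar> \<in> {\<bar>post n l k Lm y i - (\<Sum>j<\<nu>. W i j * blurry_deg_dist n s G j)\<bar> |i. i < k}"
      using k by auto
    then show "{\<bar>post n l k Lm y i - (\<Sum>j<\<nu>. W i j * blurry_deg_dist n s G j)\<bar> |i. i < k} \<noteq> {}" by blast
    show "\<forall>a\<in>{\<bar>post n l k Lm y i - (\<Sum>j<\<nu>. W i j * blurry_deg_dist n s G j)\<bar> |i. i < k}. a \<le> \<eta> + Max {\<bar>Zerr n l Lm (\<lambda>i. Uvec \<nu> s Rm (nbhd G i)) j y\<bar> |j. j < k}"
      using each unfolding MZ_def \<mu>_def by auto
  qed
qed

lemma post_meas_gjoint: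
  assumes "0 < \<sigma>"
  shows "post n l k Lm \<in> measurable (gjoint n l \<sigma> \<mu>) vec_space"
  using post_measurable unfolding gjoint_def
  by (subst measurable_cong_sets[OF sets_PiM_cong[OF refl] refl]) (auto simp: sets_gnode)

lemma alg_output_eq:
  assumes "0 < \<sigma>"
  shows "alg_output n prho (\<lambda>\<rho> i S. gnode l \<sigma> (Uvec \<nu> s Rm S)) (post n l k Lm) vec_space G
       = distr (gjoint n l \<sigma> (\<lambda>i. Uvec \<nu> s Rm (nbhd G i))) vec_space (post n l k Lm)"
  unfolding alg_output_def prho_def node_outputs_eq
  by (rule bind_return[OF measurable_const[OF kernel_in_space[OF assms]]]) simp

lemma sup_err_measurable:
  "(\<lambda>x. ennreal (sup_err k x c)) \<in> borel_measurable vec_space"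
proof -
  have [measurable]: "(\<lambda>x. x i) \<in> borel_measurable vec_space" for i :: nat
    unfolding vec_space_def by (rule measurable_component_singleton) simp
  have "(\<lambda>x. Max {\<bar>x i - c i\<bar> | i. i \<in> {..<k}}) \<in> borel_measurable vec_space"
    by (rule borel_measurable_Max2) auto
  then have "(\<lambda>x. sup_err k x c) \<in> borel_measurable vec_space"
    unfolding sup_err_def lessThan_iff[symmetric] .
  then show ?thesis by (rule measurable_compose[OF _ measurable_ennreal])
qed

lemma Zerr_measurable:
  assumes "0 < \<sigma>"
  shows "Zerr n l Lm \<mu> j \<in> borel_measurable (gjoint n l \<sigma> \<mu>')"
proof -
  note gbase_comp[measurable]
  have "Zerr n l Lm \<mu> j \<in> borel_measurable (gbase n l)" unfolding Zerr_def by measurable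
  then show ?thesis by (simp only: measurable_cong_sets[OF sets_gjoint[OF assms] refl])
qed

lemma Zerr_mgf:
  assumes \<sigma>: "0 < \<sigma>" and n: "1 \<le> n" and row: "(\<Sum>t<l. (Lm j t)\<^sup>2) \<le> a\<^sup>2"
  shows "(\<integral>\<^sup>+y. ennreal (exp (c * Zerr n l Lm \<mu> j y)) \<partial>gjoint n l \<sigma> \<mu>) \<le> ennreal (exp (c\<^sup>2 * (\<sigma>\<^sup>2 * a\<^sup>2 / real n) / 2))"
proof -
  have eq: "c * Zerr n l Lm \<mu> j y = (\<Sum>i<n. \<Sum>t<l. (c * Lm j t / real n) * (y i t - \<mu> i t))" for y
    unfolding Zerr_def by (simp add: sum_distrib_left mult.assoc)
  have "(\<integral>\<^sup>+y. ennreal (exp (c * Zerr n l Lm \<mu> j y)) \<partial>gjoint n l \<sigma> \<mu>)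
      = ennreal (exp (\<Sum>i<n. \<Sum>t<l. (c * Lm j t / real n)\<^sup>2 * \<sigma>\<^sup>2 / 2))"
    unfolding eq by (rule gjoint_mgf[OF \<sigma>])
  also have "(\<Sum>i<n. \<Sum>t<l. (c * Lm j t / real n)\<^sup>2 * \<sigma>\<^sup>2 / 2) = c\<^sup>2 * \<sigma>\<^sup>2 * (\<Sum>t<l. (Lm j t)\<^sup>2) / (2 * real n)"
  proof -
    have "(\<Sum>t<l. (c * Lm j t / real n)\<^sup>2 * \<sigma>\<^sup>2 / 2) = c\<^sup>2 * \<sigma>\<^sup>2 * (\<Sum>t<l. (Lm j t)\<^sup>2) / (2 * (real n)\<^sup>2)"
      by (simp add: sum_distrib_left sum_divide_distrib power_mult_distrib power_divide algebra_simps)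
    then show ?thesis using n by (simp add: power2_eq_square)
  qed
  also have "\<dots> \<le> c\<^sup>2 * (\<sigma>\<^sup>2 * a\<^sup>2 / real n) / 2"
  proof -
    have "c\<^sup>2 * \<sigma>\<^sup>2 * (\<Sum>t<l. (Lm j t)\<^sup>2) \<le> c\<^sup>2 * \<sigma>\<^sup>2 * a\<^sup>2"
      using row by (intro mult_left_mono) auto
    then show ?thesis using n by (simp add: divide_right_mono field_simps)
  qed
  finally show ?thesis by (simp add: ennreal_leI)
qed

lemma mech_acc:
  assumes \<sigma>: "0 < \<sigma>" and n: "1 \<le> n" and s: "1 \<le> s" and k: "2 \<le> k" and G: "simple_graph n G" and eta: "0 \<le> \<eta>"
    and approx: "\<And>j j'. j < k \<Longrightarrow> j' < \<nu> \<Longrightarrow> \<bar>mat_mult l Lm Rm j j' - W j j'\<bar> \<le> \<eta>"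
    and row: "\<And>j. j < k \<Longrightarrow> (\<Sum>t<l. (Lm j t)\<^sup>2) \<le> a\<^sup>2"
    and lam: "0 < lam"
  shows "(\<integral>\<^sup>+x. ennreal (sup_err k x (\<lambda>i. \<Sum>j<\<nu>. W i j * blurry_deg_dist n s G j))
            \<partial>alg_output n prho (\<lambda>\<rho> i S. gnode l \<sigma> (Uvec \<nu> s Rm S)) (post n l k Lm) vec_space G)
         \<le> ennreal (\<eta> + (ln (2 * real k) + lam\<^sup>2 * (\<sigma>\<^sup>2 * a\<^sup>2 / real n) / 2) / lam)"
proof -
  define \<mu> where "\<mu> = (\<lambda>i. Uvec \<nu> s Rm (nbhd G i))"
  define c where "c = (\<lambda>i. \<Sum>j<\<nu>. W i j * blurry_deg_dist n s G j)"
  have m1: "(\<lambda>x. ennreal (sup_err k x c)) \<in> borel_measurable (distr (gjoint n l \<sigma> \<mu>) vec_space (post n l k Lm))"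
    by (simp only: measurable_cong_sets[OF sets_distr refl] sup_err_measurable)
  have "(\<integral>\<^sup>+x. ennreal (sup_err k x c) \<partial>alg_output n prho (\<lambda>\<rho> i S. gnode l \<sigma> (Uvec \<nu> s Rm S)) (post n l k Lm) vec_space G)
      = (\<integral>\<^sup>+y. ennreal (sup_err k (post n l k Lm y) c) \<partial>gjoint n l \<sigma> \<mu>)"
    unfolding alg_output_eq[OF \<sigma>] \<mu>_def[symmetric]
    by (rule nn_integral_distr[OF post_meas_gjoint[OF \<sigma>] m1])
  also have "\<dots> \<le> ennreal (\<eta> + (ln (2 * real k) + lam\<^sup>2 * (\<sigma>\<^sup>2 * a\<^sup>2 / real n) / 2) / lam)"
  proof (rule expmax[where Z="\<lambda>j. Zerr n l Lm \<mu> j"])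
    show "prob_space (gjoint n l \<sigma> \<mu>)" by (rule prob_space_gjoint[OF \<sigma>])
    show "0 \<le> \<sigma>\<^sup>2 * a\<^sup>2 / real n" by simp
    fix j assume j: "j < k"
    show "Zerr n l Lm \<mu> j \<in> borel_measurable (gjoint n l \<sigma> \<mu>)" by (rule Zerr_measurable[OF \<sigma>])
    show "(\<integral>\<^sup>+x. ennreal (exp (lam * Zerr n l Lm \<mu> j x)) \<partial>gjoint n l \<sigma> \<mu>) \<le> ennreal (exp (lam\<^sup>2 * (\<sigma>\<^sup>2 * a\<^sup>2 / real n) / 2))"
      by (rule Zerr_mgf[where Lm=Lm and j=j and l=l and a=a, OF \<sigma> n row[OF j]])
    show "(\<integral>\<^sup>+x. ennreal (exp (- lam * Zerr n l Lm \<mu> j x)) \<partial>gjoint n l \<sigma> \<mu>) \<le> ennreal (exp (lam\<^sup>2 * (\<sigma>\<^sup>2 * a\<^sup>2 / real n) / 2))"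
      using Zerr_mgf[where Lm=Lm and j=j and l=l and a=a and c="- lam" and \<mu>=\<mu>, OF \<sigma> n row[OF j]] by simp
  next
    fix y
    show "sup_err k (post n l k Lm y) c \<le> \<eta> + Max {\<bar>Zerr n l Lm \<mu> j y\<bar> |j. j < k}"
      unfolding c_def \<mu>_def by (rule pointwise_err[OF n s k G eta approx])
  qed (use k lam eta in auto)
  finally show ?thesis unfolding c_def .
qed

lemma mech_acc0:
  assumes \<sigma>: "0 < \<sigma>" and n: "1 \<le> n" and s: "1 \<le> s" and k: "2 \<le> k" and G: "simple_graph n G" and eta: "0 \<le> \<eta>"
    and approx: "\<And>j j'. j < k \<Longrightarrow> j' < \<nu> \<Longrightarrow> \<bar>mat_mult l (\<lambda>_ _. 0) Rm j j' - W j j'\<bar> \<le> \<eta>"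
  shows "(\<integral>\<^sup>+x. ennreal (sup_err k x (\<lambda>i. \<Sum>j<\<nu>. W i j * blurry_deg_dist n s G j))
            \<partial>alg_output n prho (\<lambda>\<rho> i S. gnode l \<sigma> (Uvec \<nu> s Rm S)) (post n l k (\<lambda>_ _. 0)) vec_space G)
         \<le> ennreal \<eta>"
proof -
  define \<mu> where "\<mu> = (\<lambda>i. Uvec \<nu> s Rm (nbhd G i))"
  define c where "c = (\<lambda>i. \<Sum>j<\<nu>. W i j * blurry_deg_dist n s G j)"
  interpret prob_space "gjoint n l \<sigma> \<mu>" by (rule prob_space_gjoint[OF \<sigma>])
  have m1: "(\<lambda>x. ennreal (sup_err k x c)) \<in> borel_measurable (distr (gjoint n l \<sigma> \<mu>) vec_space (post n l k (\<lambda>_ _. 0)))"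
    by (simp only: measurable_cong_sets[OF sets_distr refl] sup_err_measurable)
  have "(\<integral>\<^sup>+x. ennreal (sup_err k x c) \<partial>alg_output n prho (\<lambda>\<rho> i S. gnode l \<sigma> (Uvec \<nu> s Rm S)) (post n l k (\<lambda>_ _. 0)) vec_space G)
      = (\<integral>\<^sup>+y. ennreal (sup_err k (post n l k (\<lambda>_ _. 0) y) c) \<partial>gjoint n l \<sigma> \<mu>)"
    unfolding alg_output_eq[OF \<sigma>] \<mu>_def[symmetric]
    by (rule nn_integral_distr[OF post_meas_gjoint[OF \<sigma>] m1])
  also have "\<dots> \<le> (\<integral>\<^sup>+y. ennreal \<eta> \<partial>gjoint n l \<sigma> \<mu>)"
  proof (rule nn_integral_mono)
    fix y
    have "sup_err k (post n l k (\<lambda>_ _. 0) y) c \<le> \<eta> + Max {\<bar>Zerr n l (\<lambda>_ _. 0) \<mu> j y\<bar> |j. j < k}"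
      unfolding c_def \<mu>_def by (rule pointwise_err[OF n s k G eta approx])
    also have "{\<bar>Zerr n l (\<lambda>_ _. 0) \<mu> j y\<bar> |j. j < k} = {0}"
    proof -
      have "(0::nat) < k" using k by simp
      then show ?thesis unfolding Zerr_def by auto
    qed
    finally show "ennreal (sup_err k (post n l k (\<lambda>_ _. 0) y) c) \<le> ennreal \<eta>" by (intro ennreal_leI) simp
  qed
  also have "\<dots> = ennreal \<eta>" by (simp add: emeasure_space_1)
  finally show ?thesis unfolding c_def .
qed



definition Sg :: "real \<Rightarrow> nat \<Rightarrow> nat \<Rightarrow> (nat \<Rightarrow> nat \<Rightarrow> real) \<Rightarrow> real set" where
  "Sg \<eta> k \<nu> W = {norm_2_inf k l L * norm_1_2 l \<nu> R | l L R.
       norm_1_inf k \<nu> (\<lambda>i j. mat_mult l L R i j - W i j) \<le> \<eta>}"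

lemma gamma_Sg: "gamma_fact \<eta> k \<nu> W = Inf (Sg \<eta> k \<nu> W)"
  unfolding gamma_fact_def Sg_def ..

lemma Sg_nonempty:
  assumes k: "0 < k" and nu: "0 < \<nu>" and eta: "0 \<le> \<eta>"
  shows "Sg \<eta> k \<nu> W \<noteq> {}"
proof -
  define Id where "Id t j = (if t = j then 1 else (0::real))" for t j :: nat
  have mm: "mat_mult \<nu> W Id i j = W i j" if "j < \<nu>" for i j
    unfolding mat_mult_def Id_def using that by (simp add: if_distrib cong: if_cong)
  have "{\<bar>mat_mult \<nu> W Id i j - W i j\<bar> |i j. i < k \<and> j < \<nu>} \<subseteq> {0}"
    using mm by auto
  moreover have "\<bar>mat_mult \<nu> W Id 0 0 - W 0 0\<bar> \<in> {\<bar>mat_mult \<nu> W Id i j - W i j\<bar> |i j. i < k \<and> j < \<nu>}"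
    using k nu by blast
  moreover have "\<bar>mat_mult \<nu> W Id 0 0 - W 0 0\<bar> = 0" using mm[OF nu] by simp
  ultimately have "{\<bar>mat_mult \<nu> W Id i j - W i j\<bar> |i j. i < k \<and> j < \<nu>} = {0}" by auto
  then have "norm_1_inf k \<nu> (\<lambda>i j. mat_mult \<nu> W Id i j - W i j) \<le> \<eta>"
    unfolding norm_1_inf_def using eta by simp
  then have "norm_2_inf k \<nu> W * norm_1_2 \<nu> \<nu> Id \<in> Sg \<eta> k \<nu> W" unfolding Sg_def by blast
  then show ?thesis by blast
qed

lemma Sg_nonneg:
  assumes k: "0 < k" and nu: "0 < \<nu>" and x: "x \<in> Sg \<eta> k \<nu> W"
  shows "0 \<le> x"
proof -
  obtain l L R where "x = norm_2_inf k l L * norm_1_2 l \<nu> R" using x unfolding Sg_def by blast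
  then show ?thesis using norm_2_inf_nonneg[OF k] norm_1_2_nonneg[OF nu] by simp
qed

lemma Sg_bdd:
  assumes "0 < k" "0 < \<nu>"
  shows "bdd_below (Sg \<eta> k \<nu> W)"
  unfolding bdd_below_def using Sg_nonneg[OF assms] by blast

lemma gamma_nonneg:
  assumes k: "0 < k" and nu: "0 < \<nu>" and eta: "0 \<le> \<eta>"
  shows "0 \<le> gamma_fact \<eta> k \<nu> W"
  unfolding gamma_Sg using Sg_nonempty[OF k nu eta] Sg_nonneg[OF k nu]
  by (intro cInf_greatest) auto

lemma row_bound:
  assumes "i < k"
  shows "(\<Sum>t<l. (L i t)\<^sup>2) \<le> (norm_2_inf k l L)\<^sup>2"
proof -
  have "sqrt (\<Sum>t<l. (L i t)\<^sup>2) \<le> norm_2_inf k l L" by (rule norm_2_inf_ge[OF assms])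
  moreover have h0: "0 \<le> (\<Sum>t<l. (L i t)\<^sup>2)" by (intro sum_nonneg) simp
  ultimately have "(sqrt (\<Sum>t<l. (L i t)\<^sup>2))\<^sup>2 \<le> (norm_2_inf k l L)\<^sup>2" by (intro power_mono) auto
  then show ?thesis using h0 by simp
qed

lemma col_bound:
  assumes "j < \<nu>"
  shows "(\<Sum>t<l. (R t j)\<^sup>2) \<le> (norm_1_2 l \<nu> R)\<^sup>2"
proof -
  have "sqrt (\<Sum>t<l. (R t j)\<^sup>2) \<le> norm_1_2 l \<nu> R" by (rule norm_1_2_ge[OF assms])
  moreover have h0: "0 \<le> (\<Sum>t<l. (R t j)\<^sup>2)" by (intro sum_nonneg) simp
  ultimately have "(sqrt (\<Sum>t<l. (R t j)\<^sup>2))\<^sup>2 \<le> (norm_1_2 l \<nu> R)\<^sup>2" by (intro power_mono) auto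
  then show ?thesis using h0 by simp
qed

lemma approx_bound:
  assumes "norm_1_inf k \<nu> (\<lambda>i j. mat_mult l L R i j - W i j) \<le> \<eta>" "i < k" "j < \<nu>"
  shows "\<bar>mat_mult l L R i j - W i j\<bar> \<le> \<eta>"
  using norm_1_inf_ge[OF assms(2,3), of "\<lambda>i j. mat_mult l L R i j - W i j"] assms(1) by simp

lemma mm_bound:
  assumes "i < k" "j < \<nu>"
  shows "\<bar>mat_mult l L R i j\<bar> \<le> norm_2_inf k l L * norm_1_2 l \<nu> R"
proof -
  have "\<bar>mat_mult l L R i j\<bar> \<le> sqrt (\<Sum>t<l. (L i t)\<^sup>2) * sqrt (\<Sum>t<l. (R t j)\<^sup>2)"
    unfolding mat_mult_def by (rule cs_abs)
  also have "\<dots> \<le> norm_2_inf k l L * norm_1_2 l \<nu> R"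
    using norm_2_inf_ge[OF assms(1), where p=l and A=L] norm_1_2_ge[OF assms(2), where m=l and A=R]
    using norm_2_inf_nonneg[of k l L] assms(1) by (intro mult_mono) (auto intro: sum_nonneg)
  finally show ?thesis .
qed

lemma gamma_zero_W:
  assumes k: "0 < k" and nu: "0 < \<nu>" and eta: "0 \<le> \<eta>" and g: "gamma_fact \<eta> k \<nu> W = 0"
    and i: "i < k" and j: "j < \<nu>"
  shows "\<bar>W i j\<bar> \<le> \<eta>"
proof (rule ccontr)
  assume "\<not> \<bar>W i j\<bar> \<le> \<eta>"
  then have th: "0 < \<bar>W i j\<bar> - \<eta>" by simp
  have "Inf (Sg \<eta> k \<nu> W) < \<bar>W i j\<bar> - \<eta>" using g th unfolding gamma_Sg by simp
  then obtain x where x: "x \<in> Sg \<eta> k \<nu> W" "x < \<bar>W i j\<bar> - \<eta>"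
    using cInf_lessD[OF Sg_nonempty[OF k nu eta]] by blast
  then obtain l L R where xe: "x = norm_2_inf k l L * norm_1_2 l \<nu> R"
    and ap: "norm_1_inf k \<nu> (\<lambda>i j. mat_mult l L R i j - W i j) \<le> \<eta>" unfolding Sg_def by blast
  have "\<bar>W i j\<bar> \<le> \<bar>mat_mult l L R i j - W i j\<bar> + \<bar>mat_mult l L R i j\<bar>" by linarith
  also have "\<dots> \<le> \<eta> + x" using approx_bound[OF ap i j] mm_bound[OF i j, where l=l and L=L and R=R] xe by linarith
  finally show False using x by linarith
qed

lemma gamma_pos_witness:
  assumes k: "0 < k" and nu: "0 < \<nu>" and eta: "0 \<le> \<eta>" and g: "0 < gamma_fact \<eta> k \<nu> W"
  obtains l L R where "norm_1_inf k \<nu> (\<lambda>i j. mat_mult l L R i j - W i j) \<le> \<eta>"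
    "norm_2_inf k l L * norm_1_2 l \<nu> R < 2 * gamma_fact \<eta> k \<nu> W"
    "gamma_fact \<eta> k \<nu> W \<le> norm_2_inf k l L * norm_1_2 l \<nu> R"
proof -
  have "Inf (Sg \<eta> k \<nu> W) < 2 * gamma_fact \<eta> k \<nu> W" using g unfolding gamma_Sg by simp
  then obtain x where x: "x \<in> Sg \<eta> k \<nu> W" "x < 2 * gamma_fact \<eta> k \<nu> W"
    using cInf_lessD[OF Sg_nonempty[OF k nu eta]] by blast
  then obtain l L R where xe: "x = norm_2_inf k l L * norm_1_2 l \<nu> R"
    and ap: "norm_1_inf k \<nu> (\<lambda>i j. mat_mult l L R i j - W i j) \<le> \<eta>" unfolding Sg_def by blast
  have "gamma_fact \<eta> k \<nu> W \<le> x" unfolding gamma_Sg using x(1) Sg_bdd[OF k nu] by (rule cInf_lower)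
  then show ?thesis using that ap x xe by blast
qed

lemma opt_lam:
  fixes A v :: real
  assumes A: "0 < A" and v: "0 < v"
  shows "(A + (sqrt (2 * A / v))\<^sup>2 * v / 2) / sqrt (2 * A / v) = sqrt (2 * A * v)"
proof -
  define q where "q = sqrt (2 * A / v)"
  have q0: "0 < q" unfolding q_def using A v by simp
  have q2: "q\<^sup>2 = 2 * A / v" unfolding q_def using A v by simp
  have num: "A + q\<^sup>2 * v / 2 = 2 * A" unfolding q2 using v by simp
  have "(2 * A / q)\<^sup>2 = 2 * A * v"
    using q2 v A q0 by (simp add: power_divide field_simps power2_eq_square)
  then have "sqrt (2 * A * v) = 2 * A / q" using A q0 by (intro real_sqrt_unique) auto
  then show ?thesis unfolding q_def[symmetric] num by simp
qed

lemma final_ineq: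
  fixes \<gamma> a r Lg Q lk lk2 \<epsilon> :: real
  assumes g: "0 \<le> a * r" "a * r < 2 * \<gamma>" and P: "0 \<le> Lg * Q / \<epsilon>\<^sup>2" and lk: "0 \<le> lk2" "lk2 \<le> 2 * lk"
  shows "64 * lk2 * (Lg * Q / \<epsilon>\<^sup>2) * (a * r)\<^sup>2 \<le> 1024 * \<gamma>\<^sup>2 * lk * (Lg * Q / \<epsilon>\<^sup>2)"
proof -
  have ar2: "(a * r)\<^sup>2 \<le> (2 * \<gamma>)\<^sup>2" using g by (intro power_mono) auto
  have "lk2 * (a * r)\<^sup>2 \<le> (2 * lk) * (2 * \<gamma>)\<^sup>2"
    using ar2 lk by (intro mult_mono) auto
  then have "lk2 * (a * r)\<^sup>2 \<le> 8 * \<gamma>\<^sup>2 * lk" by (simp add: power_mult_distrib algebra_simps)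
  moreover have "0 \<le> \<gamma>\<^sup>2 * lk"
  proof -
    have "0 \<le> lk" using lk by linarith
    then show ?thesis by simp
  qed
  ultimately have "64 * (lk2 * (a * r)\<^sup>2) \<le> 1024 * (\<gamma>\<^sup>2 * lk)" by linarith
  then have "64 * (lk2 * (a * r)\<^sup>2) * (Lg * Q / \<epsilon>\<^sup>2) \<le> 1024 * (\<gamma>\<^sup>2 * lk) * (Lg * Q / \<epsilon>\<^sup>2)"
    using P by (intro mult_right_mono) auto
  then show ?thesis by (simp add: algebra_simps)
qed



lemma main_case:
  fixes \<epsilon> \<delta> \<eta> :: real and n s k \<nu> :: nat and W :: "nat \<Rightarrow> nat \<Rightarrow> real"
  assumes e: "0 < \<epsilon>" "\<epsilon> < 1" and d: "0 < \<delta>" "\<delta> \<le> 1/2" and n: "1 \<le> n" and s: "1 \<le> s"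
    and k: "2 \<le> k" and eta: "0 \<le> \<eta>" and nu: "0 < \<nu>"
  shows "\<exists>(Prho :: (nat \<Rightarrow> real) measure) (Mb :: (nat \<Rightarrow> real) measure)
         (R :: (nat \<Rightarrow> real) \<Rightarrow> nat \<Rightarrow> nat set \<Rightarrow> (nat \<Rightarrow> real) measure)
         (P :: (nat \<Rightarrow> (nat \<Rightarrow> real)) \<Rightarrow> (nat \<Rightarrow> real)).
        LNDP \<epsilon> \<delta> n Prho Mb R P vec_space \<and>
        (\<forall>G. simple_graph n G \<longrightarrow>
           (\<integral>\<^sup>+ x. ennreal (sup_err k x (\<lambda>i. \<Sum>j<\<nu>. W i j * blurry_deg_dist n s G j))
              \<partial>alg_output n Prho R P vec_space G)
           \<le> ennreal (32 * (\<eta> + gamma_fact \<eta> k \<nu> W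
                 * sqrt ((1 / real n + 1 / (real s)\<^sup>2) * ln (real k))
                 * sqrt (ln (1 / \<delta>)) / \<epsilon>)))"
proof -
  define \<gamma> where "\<gamma> = gamma_fact \<eta> k \<nu> W"
  define Lg where "Lg = ln (1 / \<delta>)"
  define Q where "Q = 1 / real n + 1 / (real s)\<^sup>2"
  define F where "F = sqrt (Q * ln (real k)) * sqrt Lg / \<epsilon>"
  have k0: "0 < k" using k by simp
  have e1: "\<epsilon> \<le> 1" using e by simp
  have Lg0: "0 < Lg" unfolding Lg_def using d by simp
  have Q0: "0 < Q" unfolding Q_def using n by (intro add_pos_nonneg) auto
  have lnk: "0 < ln (real k)" using k by simp
  have F0: "0 \<le> F" unfolding F_def using e Q0 lnk Lg0 by (intro divide_nonneg_pos mult_nonneg_nonneg real_sqrt_ge_zero) auto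
  have g0: "0 \<le> \<gamma>" unfolding \<gamma>_def by (rule gamma_nonneg[OF k0 nu eta])
  have rhs: "\<gamma> * sqrt ((1 / real n + 1 / (real s)\<^sup>2) * ln (real k)) * sqrt (ln (1 / \<delta>)) / \<epsilon> = \<gamma> * F"
    unfolding F_def Q_def Lg_def by simp
  show ?thesis
  proof (cases "\<gamma> = 0")
    case True
    have Wb: "\<bar>W i j\<bar> \<le> \<eta>" if "i < k" "j < \<nu>" for i j
      using gamma_zero_W[OF k0 nu eta True[unfolded \<gamma>_def] that] .
    define Rm :: "nat \<Rightarrow> nat \<Rightarrow> real" where "Rm = (\<lambda>_ _. 0)"
    have L: "LNDP \<epsilon> \<delta> n prho (PiM {..<1} (\<lambda>_. borel)) (\<lambda>\<rho> i S. gnode 1 1 (Uvec \<nu> s Rm S)) (post n 1 k (\<lambda>_ _. 0)) vec_space"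
    proof (rule mech_LNDP[where r=0])
    qed (use e d s Lg0[unfolded Lg_def] in \<open>auto simp: Rm_def\<close>)
    have A: "(\<integral>\<^sup>+ x. ennreal (sup_err k x (\<lambda>i. \<Sum>j<\<nu>. W i j * blurry_deg_dist n s G j))
              \<partial>alg_output n prho (\<lambda>\<rho> i S. gnode 1 1 (Uvec \<nu> s Rm S)) (post n 1 k (\<lambda>_ _. 0)) vec_space G)
           \<le> ennreal (32 * (\<eta> + gamma_fact \<eta> k \<nu> W
                 * sqrt ((1 / real n + 1 / (real s)\<^sup>2) * ln (real k))
                 * sqrt (ln (1 / \<delta>)) / \<epsilon>))" if G: "simple_graph n G" for G
    proof -
      have "(\<integral>\<^sup>+ x. ennreal (sup_err k x (\<lambda>i. \<Sum>j<\<nu>. W i j * blurry_deg_dist n s G j))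
              \<partial>alg_output n prho (\<lambda>\<rho> i S. gnode 1 1 (Uvec \<nu> s Rm S)) (post n 1 k (\<lambda>_ _. 0)) vec_space G) \<le> ennreal \<eta>"
        by (rule mech_acc0[OF _ n s k G eta]) (auto simp: mat_mult_def Wb)
      also have "\<dots> \<le> ennreal (32 * (\<eta> + gamma_fact \<eta> k \<nu> W
                 * sqrt ((1 / real n + 1 / (real s)\<^sup>2) * ln (real k))
                 * sqrt (ln (1 / \<delta>)) / \<epsilon>))"
        using True eta unfolding \<gamma>_def by (intro ennreal_leI) simp
      finally show ?thesis .
    qed
    show ?thesis using L A by blast
  next
    case False
    then have gpos: "0 < \<gamma>" using g0 by simp
    obtain l L R where ap: "norm_1_inf k \<nu> (\<lambda>i j. mat_mult l L R i j - W i j) \<le> \<eta>"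
      and lt: "norm_2_inf k l L * norm_1_2 l \<nu> R < 2 * \<gamma>"
      and ge: "\<gamma> \<le> norm_2_inf k l L * norm_1_2 l \<nu> R"
      using gamma_pos_witness[OF k0 nu eta gpos[unfolded \<gamma>_def]] unfolding \<gamma>_def by blast
    define a where "a = norm_2_inf k l L"
    define r where "r = norm_1_2 l \<nu> R"
    have a0: "0 \<le> a" unfolding a_def by (rule norm_2_inf_nonneg[OF k0])
    have r0: "0 \<le> r" unfolding r_def by (rule norm_1_2_nonneg[OF nu])
    have arpos: "0 < a * r" using ge gpos unfolding a_def r_def by linarith
    have apos: "0 < a" using a0 arpos by (metis mult_zero_left order_le_less)
    have rpos: "0 < r" using r0 arpos by (metis mult_zero_right order_le_less)
    define \<sigma> where "\<sigma> = sqrt (32 * Lg * (1 + real n / (real s)\<^sup>2)) * r / \<epsilon>"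
    have B0: "0 < 32 * Lg * (1 + real n / (real s)\<^sup>2)" using Lg0 by (simp add: add_pos_nonneg)
    have \<sigma>0: "0 < \<sigma>" unfolding \<sigma>_def using B0 rpos e by simp
    have \<sigma>2: "\<sigma>\<^sup>2 = 32 * Lg * (1 + real n / (real s)\<^sup>2) * r\<^sup>2 / \<epsilon>\<^sup>2"
      unfolding \<sigma>_def using B0 by (simp add: power_divide power_mult_distrib)
    have L: "LNDP \<epsilon> \<delta> n prho (PiM {..<l} (\<lambda>_. borel)) (\<lambda>\<rho> i S. gnode l \<sigma> (Uvec \<nu> s R S)) (post n l k L) vec_space"
    proof (rule mech_LNDP[OF \<sigma>0 e(1) e1 d s])
      show "\<And>j. j < \<nu> \<Longrightarrow> (\<Sum>t<l. (R t j)\<^sup>2) \<le> r\<^sup>2" unfolding r_def by (rule col_bound)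
      show "r\<^sup>2 * (4 + 4 * real n / (real s)\<^sup>2) \<le> \<sigma>\<^sup>2 * \<epsilon>\<^sup>2 / (8 * ln (1 / \<delta>))"
        unfolding \<sigma>2 Lg_def[symmetric] using Lg0 e by (simp add: field_simps)
    qed
    define v where "v = \<sigma>\<^sup>2 * a\<^sup>2 / real n"
    define A where "A = ln (2 * real k)"
    have v0: "0 < v" unfolding v_def using \<sigma>0 apos n by simp
    have A0: "0 < A" unfolding A_def using k by simp
    define lam where "lam = sqrt (2 * A / v)"
    have lam0: "0 < lam" unfolding lam_def using A0 v0 by simp
    have bound: "\<eta> + (ln (2 * real k) + lam\<^sup>2 * (\<sigma>\<^sup>2 * a\<^sup>2 / real n) / 2) / lam \<le> 32 * (\<eta> + \<gamma> * F)"
    proof -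
      have eq1: "(ln (2 * real k) + lam\<^sup>2 * (\<sigma>\<^sup>2 * a\<^sup>2 / real n) / 2) / lam = sqrt (2 * A * v)"
        unfolding A_def[symmetric] v_def[symmetric] lam_def by (rule opt_lam[OF A0 v0])
      have eq2: "2 * A * v = 64 * A * (Lg * Q / \<epsilon>\<^sup>2) * (a * r)\<^sup>2"
        unfolding v_def \<sigma>2 Q_def using n s by (simp add: field_simps power_mult_distrib)
      have lk: "A \<le> 2 * ln (real k)"
      proof -
        have "A = ln 2 + ln (real k)" unfolding A_def using k by (simp add: ln_mult)
        moreover have "ln 2 \<le> ln (real k)" using k by simp
        ultimately show ?thesis by linarith
      qed
      have "2 * A * v \<le> 1024 * \<gamma>\<^sup>2 * ln (real k) * (Lg * Q / \<epsilon>\<^sup>2)"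
        unfolding eq2 using final_ineq[of a r \<gamma> Lg Q \<epsilon> A "ln (real k)"] arpos lt A0 lk Lg0 Q0
        unfolding a_def r_def by (simp add: less_imp_le)
      also have "\<dots> = (32 * \<gamma> * F)\<^sup>2"
        unfolding F_def using Q0 lnk Lg0 e by (simp add: power_mult_distrib power_divide real_sqrt_mult)
      finally have "sqrt (2 * A * v) \<le> sqrt ((32 * \<gamma> * F)\<^sup>2)" by (rule real_sqrt_le_mono)
      also have "\<dots> = 32 * \<gamma> * F" using g0 F0 by simp
      finally show ?thesis unfolding eq1 using eta by simp
    qed
    have A: "(\<integral>\<^sup>+ x. ennreal (sup_err k x (\<lambda>i. \<Sum>j<\<nu>. W i j * blurry_deg_dist n s G j))
              \<partial>alg_output n prho (\<lambda>\<rho> i S. gnode l \<sigma> (Uvec \<nu> s R S)) (post n l k L) vec_space G)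
           \<le> ennreal (32 * (\<eta> + gamma_fact \<eta> k \<nu> W
                 * sqrt ((1 / real n + 1 / (real s)\<^sup>2) * ln (real k))
                 * sqrt (ln (1 / \<delta>)) / \<epsilon>))" if G: "simple_graph n G" for G
    proof -
      have "(\<integral>\<^sup>+ x. ennreal (sup_err k x (\<lambda>i. \<Sum>j<\<nu>. W i j * blurry_deg_dist n s G j))
              \<partial>alg_output n prho (\<lambda>\<rho> i S. gnode l \<sigma> (Uvec \<nu> s R S)) (post n l k L) vec_space G)
            \<le> ennreal (\<eta> + (ln (2 * real k) + lam\<^sup>2 * (\<sigma>\<^sup>2 * a\<^sup>2 / real n) / 2) / lam)"
      proof (rule mech_acc[OF \<sigma>0 n s k G eta _ _ lam0])
        show "\<And>j j'. j < k \<Longrightarrow> j' < \<nu> \<Longrightarrow> \<bar>mat_mult l L R j j' - W j j'\<bar> \<le> \<eta>"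
          by (rule approx_bound[OF ap])
        show "\<And>j. j < k \<Longrightarrow> (\<Sum>t<l. (L j t)\<^sup>2) \<le> a\<^sup>2" unfolding a_def by (rule row_bound)
      qed
      also have "\<dots> \<le> ennreal (32 * (\<eta> + gamma_fact \<eta> k \<nu> W
                 * sqrt ((1 / real n + 1 / (real s)\<^sup>2) * ln (real k))
                 * sqrt (ln (1 / \<delta>)) / \<epsilon>))"
        unfolding \<gamma>_def[symmetric] rhs using bound by (rule ennreal_leI)
      finally show ?thesis .
    qed
    show ?thesis using L A by blast
  qed
qed


theorem theorem4p2:
  "\<exists>C>0. \<forall>(\<epsilon>::real) (\<delta>::real) (n::nat) (s::nat) (k::nat) (\<eta>::real) (W::nat \<Rightarrow> nat \<Rightarrow> real).
     0 < \<epsilon> \<and> \<epsilon> < 1 \<and> 0 < \<delta> \<and> \<delta> \<le> 1/2 \<and> 1 \<le> n \<and> 1 \<le> s \<and> 2 \<le> k \<and> 0 \<le> \<eta> \<longrightarrow>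
     (let \<nu> = nat \<lceil>real n / real s\<rceil> + 1 in
      \<exists>(Prho :: (nat \<Rightarrow> real) measure) (Mb :: (nat \<Rightarrow> real) measure)
         (R :: (nat \<Rightarrow> real) \<Rightarrow> nat \<Rightarrow> nat set \<Rightarrow> (nat \<Rightarrow> real) measure)
         (P :: (nat \<Rightarrow> (nat \<Rightarrow> real)) \<Rightarrow> (nat \<Rightarrow> real)).
        LNDP \<epsilon> \<delta> n Prho Mb R P vec_space \<and>
        (\<forall>G. simple_graph n G \<longrightarrow>
           (\<integral>\<^sup>+ x. ennreal (sup_err k x (\<lambda>i. \<Sum>j<\<nu>. W i j * blurry_deg_dist n s G j))
              \<partial>alg_output n Prho R P vec_space G)
           \<le> ennreal (C * (\<eta> + gamma_fact \<eta> k \<nu> W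
                 * sqrt ((1 / real n + 1 / (real s)\<^sup>2) * ln (real k))
                 * sqrt (ln (1 / \<delta>)) / \<epsilon>))))"
proof (intro exI[of _ "32::real"] conjI allI impI)
  show "0 < (32::real)" by simp
next
  fix \<epsilon> \<delta> :: real and n s k :: nat and \<eta> :: real and W :: "nat \<Rightarrow> nat \<Rightarrow> real"
  assume H: "0 < \<epsilon> \<and> \<epsilon> < 1 \<and> 0 < \<delta> \<and> \<delta> \<le> 1/2 \<and> 1 \<le> n \<and> 1 \<le> s \<and> 2 \<le> k \<and> 0 \<le> \<eta>"
  show "let \<nu> = nat \<lceil>real n / real s\<rceil> + 1 in
      \<exists>(Prho :: (nat \<Rightarrow> real) measure) (Mb :: (nat \<Rightarrow> real) measure)
         (R :: (nat \<Rightarrow> real) \<Rightarrow> nat \<Rightarrow> nat set \<Rightarrow> (nat \<Rightarrow> real) measure)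
         (P :: (nat \<Rightarrow> (nat \<Rightarrow> real)) \<Rightarrow> (nat \<Rightarrow> real)).
        LNDP \<epsilon> \<delta> n Prho Mb R P vec_space \<and>
        (\<forall>G. simple_graph n G \<longrightarrow>
           (\<integral>\<^sup>+ x. ennreal (sup_err k x (\<lambda>i. \<Sum>j<\<nu>. W i j * blurry_deg_dist n s G j))
              \<partial>alg_output n Prho R P vec_space G)
           \<le> ennreal (32 * (\<eta> + gamma_fact \<eta> k \<nu> W
                 * sqrt ((1 / real n + 1 / (real s)\<^sup>2) * ln (real k))
                 * sqrt (ln (1 / \<delta>)) / \<epsilon>)))"
    unfolding Let_def using H by (intro main_case) auto
qed

end
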